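(* There is an absolute constant $c>0$ such that the following holds. Let $r\ge1$, $\delta>0$, and let $P_1,\dots,P_n\colon\mathbb{F}_2^m\to\mathbb{F}_2$ be functions with $\operatorname{rank}_1(P_i)\le r$ for all $i$. Suppose that for every $i$ and every affine subspace $V+h$ of $\mathbb{F}_2^m$, the distribution of $P_i(Y)$ for $Y$ uniform on $V+h$ has total variation distance at least $\delta$ from $\mathrm{Ber}(1/3)$. Let $\mathcal{P}$ be the distribution of $(P_1(X),\dots,P_n(X))$ for $X$ uniform on $\mathbb{F}_2^m$. Then \[ \|\mathcal{P}-\mathrm{Ber}(1/3)^{\otimes n}\|_{\mathtt{TV}}\ \ge\ 1-2^{-\frac{c^r\delta^{2r}}{r!}\, n + r}. \]
   Context: For $P\colon\mathbb{F}_2^m\to\mathbb{F}_2$ not identically zero, $\operatorname{rank}_1(P)$ is the smallest positive integer $k$ such that $P=\Gamma(L_1,\dots,L_k)$ for some polynomials $L_1,\dots,L_k$ of degree at most $1$ and some function $\Gamma\colon\mathbb{F}_2^k\to\mathbb{F}_2$. Total variation distance: $\|\mathcal{D}_1-\mathcal{D}_2\|_{\mathtt{TV}}=\frac12\sum_x|\mathcal{D}_1(x)-\mathcal{D}_2(x)|$. *)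

theory Defs
  imports Main "HOL-Analysis.Analysis"
begin

text \<open>Vectors of F_2^m are modelled as functions nat => bool vanishing outside {0..<m};
  True = 1, addition is pointwise xor.\<close>

definition cube :: "nat \<Rightarrow> (nat \<Rightarrow> bool) set" where
  "cube m = {x. \<forall>i. m \<le> i \<longrightarrow> \<not> x i}"

definition vadd :: "(nat \<Rightarrow> bool) \<Rightarrow> (nat \<Rightarrow> bool) \<Rightarrow> (nat \<Rightarrow> bool)" where
  "vadd x y = (\<lambda>i. x i \<noteq> y i)"

definition vzero :: "nat \<Rightarrow> bool" where
  "vzero = (\<lambda>i. False)"

text \<open>Linear subspace of F_2^m (over F_2, closure under addition and containing 0 suffices).\<close>
definition lin_subspace :: "nat \<Rightarrow> (nat \<Rightarrow> bool) set \<Rightarrow> bool" where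
  "lin_subspace m V \<longleftrightarrow> V \<subseteq> cube m \<and> vzero \<in> V \<and> (\<forall>x\<in>V. \<forall>y\<in>V. vadd x y \<in> V)"

definition affine_sub :: "nat \<Rightarrow> (nat \<Rightarrow> bool) set \<Rightarrow> (nat \<Rightarrow> bool) \<Rightarrow> (nat \<Rightarrow> bool) set" where
  "affine_sub m V h = (\<lambda>v. vadd v h) ` V"

definition deg_le1 :: "nat \<Rightarrow> ((nat \<Rightarrow> bool) \<Rightarrow> bool) \<Rightarrow> bool" where
  "deg_le1 m L \<longleftrightarrow> (\<exists>c S. S \<subseteq> {0..<m} \<and>
      (\<forall>x\<in>cube m. L x = (c \<noteq> odd (card {i\<in>S. x i}))))"

definition rank1_repr :: "nat \<Rightarrow> ((nat \<Rightarrow> bool) \<Rightarrow> bool) \<Rightarrow> nat \<Rightarrow> bool" where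
  "rank1_repr m P k \<longleftrightarrow> (\<exists>L :: nat \<Rightarrow> (nat \<Rightarrow> bool) \<Rightarrow> bool.
      \<exists>\<Gamma> :: (nat \<Rightarrow> bool) \<Rightarrow> bool.
      (\<forall>j<k. deg_le1 m (L j)) \<and>
      (\<forall>x\<in>cube m. P x = \<Gamma> (\<lambda>j. if j < k then L j x else False)))"

definition rank1 :: "nat \<Rightarrow> ((nat \<Rightarrow> bool) \<Rightarrow> bool) \<Rightarrow> nat" where
  "rank1 m P = (LEAST k. 0 < k \<and> rank1_repr m P k)"

definition tv :: "'a set \<Rightarrow> ('a \<Rightarrow> real) \<Rightarrow> ('a \<Rightarrow> real) \<Rightarrow> real" where
  "tv A D1 D2 = (1/2) * (\<Sum>x\<in>A. \<bar>D1 x - D2 x\<bar>)"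

definition distr_unif :: "'b set \<Rightarrow> ('b \<Rightarrow> 'a) \<Rightarrow> 'a \<Rightarrow> real" where
  "distr_unif S f = (\<lambda>z. real (card {y\<in>S. f y = z}) / real (card S))"

definition ber :: "real \<Rightarrow> bool \<Rightarrow> real" where
  "ber p = (\<lambda>b. if b then p else 1 - p)"

definition ber_prod :: "nat \<Rightarrow> real \<Rightarrow> (nat \<Rightarrow> bool) \<Rightarrow> real" where
  "ber_prod n p = (\<lambda>z. \<Prod>i<n. ber p (z i))"

definition joint :: "nat \<Rightarrow> (nat \<Rightarrow> (nat \<Rightarrow> bool) \<Rightarrow> bool) \<Rightarrow> (nat \<Rightarrow> bool) \<Rightarrow> (nat \<Rightarrow> bool)" where
  "joint n P x = (\<lambda>i. if i < n then P i x else False)"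

end

theory Submission
  imports Defs "HOL-Library.FuncSet"
begin

definition bbox :: "'p set \<Rightarrow> ('p \<Rightarrow> bool) set" where
  "bbox S = {u. \<forall>p. p \<notin> S \<longrightarrow> \<not> u p}"

definition restr :: "'p set \<Rightarrow> ('p \<Rightarrow> bool) \<Rightarrow> ('p \<Rightarrow> bool)" where
  "restr S u = (\<lambda>p. p \<in> S \<and> u p)"

lemma bbox_eq_image: "bbox S = (\<lambda>T. \<lambda>p. p \<in> T) ` Pow S"
proof -
  have "u \<in> (\<lambda>T. \<lambda>p. p \<in> T) ` Pow S" if "u \<in> bbox S" for u
    using that unfolding bbox_def by (intro image_eqI[of _ _ "{p. u p}"]) auto
  then show ?thesis unfolding bbox_def by auto
qed

lemma finite_bbox[simp]: "finite S \<Longrightarrow> finite (bbox S)"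
  by (simp add: bbox_eq_image)

lemma cube_bbox: "cube m = bbox {..<m}"
  unfolding cube_def bbox_def by auto

lemma finite_cube[simp]: "finite (cube m)"
  by (simp add: cube_bbox)

lemma restr_in_bbox[simp]: "restr S u \<in> bbox S"
  unfolding restr_def bbox_def by auto

lemma sum_prod_bbox:
  fixes f :: "'p \<Rightarrow> bool \<Rightarrow> real"
  assumes "finite A"
  shows "(\<Sum>u\<in>bbox A. \<Prod>i\<in>A. f i (u i)) = (\<Prod>i\<in>A. f i True + f i False)"
proof -
  have "(\<Prod>i\<in>A. f i True + f i False) = (\<Prod>i\<in>A. \<Sum>t\<in>(UNIV::bool set). f i t)"
    by (simp add: UNIV_bool add.commute)
  also have "\<dots> = (\<Sum>g\<in>PiE A (\<lambda>_. UNIV). \<Prod>i\<in>A. f i (g i))"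
    using assms by (intro prod_sum_PiE) auto
  also have "\<dots> = (\<Sum>u\<in>bbox A. \<Prod>i\<in>A. f i (u i))"
    by (rule sum.reindex_bij_witness[of _ "\<lambda>u. restrict u A" "\<lambda>g. \<lambda>p. p \<in> A \<and> g p"])
       (auto simp: bbox_def PiE_def extensional_def restrict_def intro!: prod.cong ext)
  finally show ?thesis by simp
qed

lemma card_bbox:
  assumes "finite A" shows "real (card (bbox A)) = 2 ^ card A"
  using sum_prod_bbox[OF assms, of "\<lambda>_ _. 1"] by simp

lemma block_sum:
  fixes f :: "'i \<Rightarrow> ('p \<Rightarrow> bool) \<Rightarrow> real"
  assumes I: "finite I" and C: "\<And>i. i \<in> I \<Longrightarrow> finite (C i)"
    and disj: "\<And>i j. i \<in> I \<Longrightarrow> j \<in> I \<Longrightarrow> i \<noteq> j \<Longrightarrow> C i \<inter> C j = {}"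
  shows "(\<Sum>u\<in>bbox (\<Union>i\<in>I. C i). \<Prod>i\<in>I. f i (restr (C i) u)) = (\<Prod>i\<in>I. \<Sum>v\<in>bbox (C i). f i v)"
proof -
  have "(\<Prod>i\<in>I. \<Sum>v\<in>bbox (C i). f i v) = (\<Sum>g\<in>PiE I (\<lambda>i. bbox (C i)). \<Prod>i\<in>I. f i (g i))"
    using assms by (intro prod_sum_PiE) auto
  also have "\<dots> = (\<Sum>u\<in>bbox (\<Union>i\<in>I. C i). \<Prod>i\<in>I. f i (restr (C i) u))"
  proof (rule sum.reindex_bij_witness[of _ "\<lambda>u. \<lambda>i\<in>I. restr (C i) u" "\<lambda>g. \<lambda>p. \<exists>i\<in>I. p \<in> C i \<and> g i p"])
    fix g assume g: "g \<in> PiE I (\<lambda>i. bbox (C i))"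
    show "(\<lambda>i\<in>I. restr (C i) (\<lambda>p. \<exists>i\<in>I. p \<in> C i \<and> g i p)) = g"
    proof
      fix i show "(\<lambda>i\<in>I. restr (C i) (\<lambda>p. \<exists>i\<in>I. p \<in> C i \<and> g i p)) i = g i"
      proof (cases "i \<in> I")
        case True
        then show ?thesis using g disj unfolding restr_def bbox_def PiE_def
          by (auto intro!: ext) blast+
      next
        case False then show ?thesis using g by auto
      qed
    qed
    show "(\<lambda>p. \<exists>i\<in>I. p \<in> C i \<and> g i p) \<in> bbox (\<Union>i\<in>I. C i)"
      unfolding bbox_def by auto
    show "(\<Prod>i\<in>I. f i (restr (C i) (\<lambda>p. \<exists>i\<in>I. p \<in> C i \<and> g i p))) = (\<Prod>i\<in>I. f i (g i))"
    proof (rule prod.cong)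
      fix i assume i: "i \<in> I"
      have "restr (C i) (\<lambda>p. \<exists>i\<in>I. p \<in> C i \<and> g i p) = g i"
        using g disj i unfolding restr_def bbox_def PiE_def by (auto intro!: ext) blast+
      then show "f i (restr (C i) (\<lambda>p. \<exists>i\<in>I. p \<in> C i \<and> g i p)) = f i (g i)" by simp
    qed simp
  next
    fix u assume u: "u \<in> bbox (\<Union>i\<in>I. C i)"
    show "(\<lambda>p. \<exists>i'\<in>I. p \<in> C i' \<and> (\<lambda>i\<in>I. restr (C i) u) i' p) = u"
      using u unfolding bbox_def restr_def by (auto intro!: ext)
    show "(\<lambda>i\<in>I. restr (C i) u) \<in> PiE I (\<lambda>i. bbox (C i))"
      by auto
  qed
  finally show ?thesis by simp
qed

definition par :: "(nat \<Rightarrow> bool) \<Rightarrow> (nat \<Rightarrow> bool) \<Rightarrow> bool" where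
  "par s x = odd (card {i. s i \<and> x i})"

definition sg :: "bool \<Rightarrow> real" where
  "sg t = (if t then -1 else 1)"

lemma card_filter_sum:
  assumes "finite C"
  shows "real (card {x\<in>C. Q x}) = (\<Sum>x\<in>C. if Q x then 1 else 0)"
  using assms by (simp add: sum.inter_filter[symmetric])

lemma filter_insert_eq:
  "{p\<in>insert x X. Q p} = (if Q x then insert x {p\<in>X. Q p} else {p\<in>X. Q p})"
  by auto

lemma parity_neq:
  assumes "finite X"
  shows "odd (card {p\<in>X. f p \<noteq> g p}) = (odd (card {p\<in>X. f p}) \<noteq> odd (card {p\<in>X. g p}))"
  using assms
proof (induction X rule: finite_induct)
  case empty then show ?case by simp
next
  case (insert x X)
  have fin: "finite {p\<in>X. Q p}" for Q using insert by simp
  have nin: "x \<notin> {p\<in>X. Q p}" for Q using insert by simp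
  show ?case
    unfolding filter_insert_eq using insert.IH
    by (auto simp: card_insert_if fin nin)
qed

lemma parity_symdiff:
  assumes "finite A" "finite B"
  shows "odd (card {t\<in>(A-B)\<union>(B-A). v t}) = (odd (card {t\<in>A. v t}) \<noteq> odd (card {t\<in>B. v t}))"
proof -
  have "odd (card {p\<in>A\<union>B. (p\<in>A \<and> v p) \<noteq> (p\<in>B \<and> v p)}) =
        (odd (card {p\<in>A\<union>B. p\<in>A \<and> v p}) \<noteq> odd (card {p\<in>A\<union>B. p\<in>B \<and> v p}))"
    using assms by (intro parity_neq) auto
  moreover have "{p\<in>A\<union>B. (p\<in>A \<and> v p) \<noteq> (p\<in>B \<and> v p)} = {t\<in>(A-B)\<union>(B-A). v t}" by auto
  moreover have "{p\<in>A\<union>B. p\<in>A \<and> v p} = {t\<in>A. v t}" by auto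
  moreover have "{p\<in>A\<union>B. p\<in>B \<and> v p} = {t\<in>B. v t}" by auto
  ultimately show ?thesis by simp
qed

lemma parity_disj_union:
  assumes "finite A" "finite B" "A \<inter> B = {}"
  shows "odd (card {t\<in>A\<union>B. v t}) = (odd (card {t\<in>A. v t}) \<noteq> odd (card {t\<in>B. v t}))"
proof -
  have "(A-B)\<union>(B-A) = A \<union> B" using assms by auto
  then show ?thesis using parity_symdiff[OF assms(1,2), of v] by simp
qed

lemma parity_remove:
  assumes "finite T" "p0 \<in> T"
  shows "odd (card {t\<in>T. v t}) = (v p0 \<noteq> odd (card {t\<in>T-{p0}. v t}))"
proof -
  have "T = insert p0 (T - {p0})" using assms by auto
  then have "{t\<in>T. v t} = (if v p0 then insert p0 {t\<in>T-{p0}. v t} else {t\<in>T-{p0}. v t})"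
    by auto
  then show ?thesis using assms by (auto simp: card_insert_if)
qed

lemma vadd_cube[simp]: "x \<in> cube m \<Longrightarrow> y \<in> cube m \<Longrightarrow> vadd x y \<in> cube m"
  unfolding cube_def vadd_def by auto

lemma vadd_cancel[simp]: "vadd (vadd x y) y = x"
  unfolding vadd_def by auto

lemma vadd_zero[simp]: "vadd x vzero = x"
  unfolding vadd_def vzero_def by auto

lemma vzero_cube[simp]: "vzero \<in> cube m"
  unfolding cube_def vzero_def by auto

lemma par_cube: "x \<in> cube m \<Longrightarrow> {i. s i \<and> x i} = {i\<in>{..<m}. s i \<and> x i}"
  unfolding cube_def by auto (meson not_le)

lemma par_vadd:
  assumes "x \<in> cube m" "y \<in> cube m"
  shows "par s (vadd x y) = (par s x \<noteq> par s y)"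
proof -
  have "odd (card {i\<in>{..<m}. (s i \<and> x i) \<noteq> (s i \<and> y i)}) =
        (odd (card {i\<in>{..<m}. s i \<and> x i}) \<noteq> odd (card {i\<in>{..<m}. s i \<and> y i}))"
    by (intro parity_neq) auto
  moreover have "{i\<in>{..<m}. (s i \<and> x i) \<noteq> (s i \<and> y i)} = {i. s i \<and> vadd x y i}"
    using par_cube[OF vadd_cube[OF assms], of s] unfolding vadd_def by auto
  ultimately show ?thesis unfolding par_def using par_cube[OF assms(1)] par_cube[OF assms(2)] by simp
qed

lemma par_zero[simp]: "par s vzero = False"
  unfolding par_def vzero_def by simp

lemma prod_sg:
  assumes "finite X"
  shows "(\<Prod>p\<in>X. sg (Q p)) = sg (odd (card {p\<in>X. Q p}))"
  using assms
proof (induction X rule: finite_induct)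
  case empty then show ?case by (simp add: sg_def)
next
  case (insert x X)
  have fin: "finite {p\<in>X. Q p}" using insert by simp
  have nin: "x \<notin> {p\<in>X. Q p}" using insert by simp
  show ?case using insert unfolding filter_insert_eq
    by (auto simp: card_insert_if fin nin sg_def)
qed

lemma char_zero:
  assumes X: "finite X" and x0: "x0 \<in> cube m" and odd0: "odd (card {p\<in>X. par (a p) x0})"
  shows "(\<Sum>x\<in>cube m. sg (odd (card {p\<in>X. par (a p) x}))) = 0"
proof -
  let ?Z = "(\<Sum>x\<in>cube m. sg (odd (card {p\<in>X. par (a p) x})))"
  have "?Z = (\<Sum>x\<in>cube m. sg (odd (card {p\<in>X. par (a p) (vadd x x0)})))"
    by (rule sum.reindex_bij_witness[of _ "\<lambda>x. vadd x x0" "\<lambda>x. vadd x x0"]) (use x0 in auto)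
  also have "\<dots> = (\<Sum>x\<in>cube m. - sg (odd (card {p\<in>X. par (a p) x})))"
  proof (rule sum.cong)
    fix x assume x: "x \<in> cube m"
    have "{p\<in>X. par (a p) (vadd x x0)} = {p\<in>X. par (a p) x \<noteq> par (a p) x0}"
      using par_vadd[OF x x0] by auto
    then have "odd (card {p\<in>X. par (a p) (vadd x x0)}) = (odd (card {p\<in>X. par (a p) x}) \<noteq> True)"
      using parity_neq[OF X] odd0 by simp
    then show "sg (odd (card {p\<in>X. par (a p) (vadd x x0)})) = - sg (odd (card {p\<in>X. par (a p) x}))"
      by (simp add: sg_def)
  qed simp
  also have "\<dots> = - ?Z" by (simp add: sum_negf)
  finally show ?thesis by simp
qed

definition cell :: "nat \<Rightarrow> ('p \<Rightarrow> nat \<Rightarrow> bool) \<Rightarrow> 'p set \<Rightarrow> ('p \<Rightarrow> bool) \<Rightarrow> (nat \<Rightarrow> bool) set" where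
  "cell m a W b = {x\<in>cube m. \<forall>p\<in>W. par (a p) x = b p}"

definition indep :: "nat \<Rightarrow> ('p \<Rightarrow> nat \<Rightarrow> bool) \<Rightarrow> 'p set \<Rightarrow> 'p set \<Rightarrow> bool" where
  "indep m a W L \<longleftrightarrow> (\<forall>T R. T \<subseteq> L \<longrightarrow> T \<noteq> {} \<longrightarrow> R \<subseteq> W \<longrightarrow>
      (\<exists>x\<in>cube m. odd (card {p\<in>T. par (a p) x}) \<noteq> odd (card {p\<in>R. par (a p) x})))"

definition Zc :: "nat \<Rightarrow> ('p \<Rightarrow> nat \<Rightarrow> bool) \<Rightarrow> 'p set \<Rightarrow> real" where
  "Zc m a X = (\<Sum>x\<in>cube m. sg (odd (card {p\<in>X. par (a p) x})))"

lemma indep_mono: "indep m a W L \<Longrightarrow> L' \<subseteq> L \<Longrightarrow> indep m a W L'"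
  unfolding indep_def by (meson order_trans)

lemma indep_disj: "indep m a W L \<Longrightarrow> W \<inter> L = {}"
proof (rule ccontr)
  assume i: "indep m a W L" and "W \<inter> L \<noteq> {}"
  then obtain p where p: "p \<in> W" "p \<in> L" by auto
  from i[unfolded indep_def, rule_format, of "{p}" "{p}"] p show False by auto
qed

lemma prod_indicator:
  assumes "finite S"
  shows "(\<Prod>p\<in>S. (if Q p then 1 else 0 :: real)) = (if \<forall>p\<in>S. Q p then 1 else 0)"
proof (cases "\<forall>p\<in>S. Q p")
  case True then show ?thesis by simp
next
  case False
  then obtain p where "p \<in> S" "\<not> Q p" by auto
  then show ?thesis using assms False by (subst prod_zero) auto
qed

lemma count_formula:
  assumes S: "finite S"
  shows "real (card {x\<in>cube m. \<forall>p\<in>S. par (a p) x = e p}) =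
         (1/2) ^ card S * (\<Sum>X\<in>Pow S. (\<Prod>p\<in>X. sg (e p)) * Zc m a X)"
proof -
  have "real (card {x\<in>cube m. \<forall>p\<in>S. par (a p) x = e p}) =
        (\<Sum>x\<in>cube m. if \<forall>p\<in>S. par (a p) x = e p then 1 else 0)"
    by (rule card_filter_sum) simp
  also have "\<dots> = (\<Sum>x\<in>cube m. \<Prod>p\<in>S. (sg (e p) * sg (par (a p) x) / 2 + 1/2))"
  proof (rule sum.cong)
    fix x
    have "(\<Prod>p\<in>S. (sg (e p) * sg (par (a p) x) / 2 + 1/2)) = (\<Prod>p\<in>S. (if par (a p) x = e p then 1 else 0))"
      by (rule prod.cong) (auto simp: sg_def)
    then show "(if \<forall>p\<in>S. par (a p) x = e p then 1 else 0) = (\<Prod>p\<in>S. (sg (e p) * sg (par (a p) x) / 2 + 1/2))"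
      using prod_indicator[OF S] by simp
  qed simp
  also have "\<dots> = (\<Sum>x\<in>cube m. \<Sum>X\<in>Pow S. (1/2) ^ card S * ((\<Prod>p\<in>X. sg (e p)) * sg (odd (card {p\<in>X. par (a p) x}))))"
  proof (rule sum.cong)
    fix x
    show "(\<Prod>p\<in>S. (sg (e p) * sg (par (a p) x) / 2 + 1/2)) =
          (\<Sum>X\<in>Pow S. (1/2) ^ card S * ((\<Prod>p\<in>X. sg (e p)) * sg (odd (card {p\<in>X. par (a p) x}))))"
      unfolding prod_add[OF S]
    proof (rule sum.cong)
      fix X assume X: "X \<in> Pow S"
      then have fX: "finite X" using S finite_subset by auto
      have cS: "card S = card X + card (S - X)"
        using X S by (simp add: card_Diff_subset fX card_mono)
      have "(\<Prod>p\<in>X. sg (e p) * sg (par (a p) x) / 2) = (1/2) ^ card X * ((\<Prod>p\<in>X. sg (e p)) * (\<Prod>p\<in>X. sg (par (a p) x)))"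
      proof -
        have "(\<Prod>p\<in>X. sg (e p) * sg (par (a p) x) / 2) = (\<Prod>p\<in>X. (1/2) * (sg (e p) * sg (par (a p) x)))"
          by (rule prod.cong) auto
        also have "\<dots> = (1/2) ^ card X * ((\<Prod>p\<in>X. sg (e p)) * (\<Prod>p\<in>X. sg (par (a p) x)))"
          by (simp only: prod.distrib prod_constant)
        finally show ?thesis .
      qed
      then show "(\<Prod>p\<in>X. sg (e p) * sg (par (a p) x) / 2) * (\<Prod>p\<in>S - X. 1/2) =
            (1/2) ^ card S * ((\<Prod>p\<in>X. sg (e p)) * sg (odd (card {p\<in>X. par (a p) x})))"
        using prod_sg[OF fX, of "\<lambda>p. par (a p) x"] cS by (simp add: power_add)
    qed simp
  qed simp
  also have "\<dots> = (\<Sum>X\<in>Pow S. \<Sum>x\<in>cube m. (1/2) ^ card S * ((\<Prod>p\<in>X. sg (e p)) * sg (odd (card {p\<in>X. par (a p) x}))))"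
    by (rule sum.swap)
  also have "\<dots> = (1/2) ^ card S * (\<Sum>X\<in>Pow S. (\<Prod>p\<in>X. sg (e p)) * Zc m a X)"
    by (simp add: Zc_def sum_distrib_left)
  finally show ?thesis .
qed

lemma equidist:
  assumes W: "finite W" and L: "finite L" and ind: "indep m a W L"
  shows "real (card {x\<in>cell m a W b. \<forall>p\<in>L. par (a p) x = u p}) * 2 ^ card L = real (card (cell m a W b))"
proof -
  define e where "e = (\<lambda>p. if p \<in> W then b p else u p)"
  have disj: "W \<inter> L = {}" using indep_disj[OF ind] .
  have s1: "{x\<in>cell m a W b. \<forall>p\<in>L. par (a p) x = u p} = {x\<in>cube m. \<forall>p\<in>W\<union>L. par (a p) x = e p}"
    using disj unfolding cell_def e_def by auto
  have s2: "cell m a W b = {x\<in>cube m. \<forall>p\<in>W. par (a p) x = e p}"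
    unfolding cell_def e_def by auto
  have vanish: "(\<Prod>p\<in>X. sg (e p)) * Zc m a X = 0" if X: "X \<in> Pow (W \<union> L) - Pow W" for X
  proof -
    define T where "T = X \<inter> L"
    define R where "R = X \<inter> W"
    have "T \<noteq> {}" using X unfolding T_def by auto
    then obtain x0 where x0: "x0 \<in> cube m" and ne: "odd (card {p\<in>T. par (a p) x0}) \<noteq> odd (card {p\<in>R. par (a p) x0})"
      using ind unfolding indep_def T_def R_def by (meson inf_le2)
    have XRT: "X = T \<union> R" and dTR: "T \<inter> R = {}" using X disj unfolding T_def R_def by auto
    have fT: "finite T" "finite R" unfolding T_def R_def using L W by auto
    have "odd (card {p\<in>X. par (a p) x0})"
      using parity_disj_union[OF fT dTR, of "\<lambda>p. par (a p) x0"] ne XRT by simp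
    moreover have "finite X" using XRT fT by simp
    ultimately have "Zc m a X = 0" unfolding Zc_def using char_zero[OF _ x0] by blast
    then show ?thesis by simp
  qed
  have "(\<Sum>X\<in>Pow (W\<union>L). (\<Prod>p\<in>X. sg (e p)) * Zc m a X) = (\<Sum>X\<in>Pow W. (\<Prod>p\<in>X. sg (e p)) * Zc m a X)"
    by (rule sum.mono_neutral_right) (use W L vanish in auto)
  moreover have "card (W \<union> L) = card W + card L" using W L disj by (simp add: card_Un_disjoint)
  moreover have "real (card {x\<in>cube m. \<forall>p\<in>W\<union>L. par (a p) x = e p}) =
         (1/2) ^ card (W\<union>L) * (\<Sum>X\<in>Pow (W\<union>L). (\<Prod>p\<in>X. sg (e p)) * Zc m a X)"
    by (rule count_formula) (use W L in simp)
  moreover have "real (card {x\<in>cube m. \<forall>p\<in>W. par (a p) x = e p}) =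
         (1/2) ^ card W * (\<Sum>X\<in>Pow W. (\<Prod>p\<in>X. sg (e p)) * Zc m a X)"
    by (rule count_formula) (use W in simp)
  ultimately have key: "real (card {x\<in>cube m. \<forall>p\<in>W\<union>L. par (a p) x = e p}) * 2 ^ card L =
      real (card {x\<in>cube m. \<forall>p\<in>W. par (a p) x = e p})"
    by (simp only: power_add) (simp add: field_simps)
  show ?thesis by (subst s1, subst s2, rule key)
qed

lemma restr_bbox_eq:
  assumes "u \<in> bbox S"
  shows "(restr S v = u) \<longleftrightarrow> (\<forall>p\<in>S. v p = u p)"
  using assms unfolding restr_def bbox_def by (auto simp: fun_eq_iff)

lemma pattern_count:
  assumes W: "finite W" and S: "finite S" and ind: "indep m a W S"
  shows "real (card {x\<in>cell m a W b. \<phi> (restr S (\<lambda>p. par (a p) x))}) * 2 ^ card S =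
         real (card {u\<in>bbox S. \<phi> u}) * real (card (cell m a W b))"
proof -
  let ?A = "cell m a W b"
  let ?pi = "\<lambda>x. restr S (\<lambda>p. par (a p) x)"
  have fA: "finite ?A" unfolding cell_def by simp
  have "real (card {x\<in>?A. \<phi> (?pi x)}) = (\<Sum>x\<in>?A. if \<phi> (?pi x) then 1 else 0)"
    by (rule card_filter_sum[OF fA])
  also have "\<dots> = (\<Sum>u\<in>bbox S. \<Sum>x\<in>{x\<in>?A. ?pi x = u}. if \<phi> (?pi x) then 1 else 0)"
    by (rule sum.group[symmetric]) (use fA S in auto)
  also have "\<dots> = (\<Sum>u\<in>bbox S. if \<phi> u then real (card (cell m a W b)) / 2 ^ card S else 0)"
  proof (rule sum.cong)
    fix u assume u: "u \<in> bbox S"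
    have "(\<Sum>x\<in>{x\<in>?A. ?pi x = u}. if \<phi> (?pi x) then 1 else 0) = (\<Sum>x\<in>{x\<in>?A. ?pi x = u}. if \<phi> u then 1 else (0::real))"
      by (rule sum.cong) auto
    also have "\<dots> = (if \<phi> u then real (card {x\<in>?A. ?pi x = u}) else 0)" by simp
    also have "real (card {x\<in>?A. ?pi x = u}) = real (card {x\<in>?A. \<forall>p\<in>S. par (a p) x = u p})"
      using restr_bbox_eq[OF u] by (metis (no_types, lifting))
    also have "real (card {x\<in>?A. \<forall>p\<in>S. par (a p) x = u p}) = real (card ?A) / 2 ^ card S"
      using equidist[OF W S ind, of b u] by (simp add: field_simps)
    finally show "(\<Sum>x\<in>{x\<in>?A. ?pi x = u}. if \<phi> (?pi x) then 1 else 0) = (if \<phi> u then real (card ?A) / 2 ^ card S else 0)" .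
  qed simp
  also have "\<dots> = real (card {u\<in>bbox S. \<phi> u}) * (real (card ?A) / 2 ^ card S)"
    using S by (simp add: sum.If_cases Int_def)
  finally show ?thesis by (simp add: field_simps)
qed

lemma sqrt_prod:
  assumes "finite I"
  shows "sqrt (\<Prod>i\<in>I. f i) = (\<Prod>i\<in>I. sqrt (f i))"
  using assms by (induction I rule: finite_induct) (auto simp: real_sqrt_mult)

lemma cell_indep:
  assumes W: "finite W" and I: "finite I" and C: "\<And>i. i \<in> I \<Longrightarrow> finite (C i)"
    and disj: "\<And>i j. i \<in> I \<Longrightarrow> j \<in> I \<Longrightarrow> i \<noteq> j \<Longrightarrow> C i \<inter> C j = {}"
    and ind: "indep m a W (\<Union>i\<in>I. C i)"
    and H: "\<And>i x. i \<in> I \<Longrightarrow> x \<in> cell m a W b \<Longrightarrow> P i x = H i (restr (C i) (\<lambda>p. par (a p) x))"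
    and ne: "cell m a W b \<noteq> {}"
  shows "real (card {x\<in>cell m a W b. \<forall>i\<in>I. P i x = y i}) / real (card (cell m a W b)) =
         (\<Prod>i\<in>I. real (card {x\<in>cell m a W b. P i x = y i}) / real (card (cell m a W b)))"
proof -
  let ?A = "cell m a W b"
  let ?L = "\<Union>i\<in>I. C i"
  have fA: "finite ?A" unfolding cell_def by simp
  have cA: "real (card ?A) > 0" using fA ne by (simp add: card_gt_0_iff)
  have fL: "finite ?L" using I C by auto
  define \<phi> where "\<phi> = (\<lambda>u. \<forall>i\<in>I. H i (restr (C i) u) = y i)"
  have rr: "restr (C i) (restr ?L v) = restr (C i) v" if "i \<in> I" for i v
    using that unfolding restr_def by auto
  have e1: "{x\<in>?A. \<forall>i\<in>I. P i x = y i} = {x\<in>?A. \<phi> (restr ?L (\<lambda>p. par (a p) x))}"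
    unfolding \<phi>_def using H rr by auto
  have "real (card {u\<in>bbox ?L. \<phi> u}) = (\<Sum>u\<in>bbox ?L. if \<phi> u then 1 else 0)"
    by (rule card_filter_sum) (use fL in simp)
  also have "\<dots> = (\<Sum>u\<in>bbox ?L. \<Prod>i\<in>I. (\<lambda>i v. if H i v = y i then 1 else 0) i (restr (C i) u))"
    unfolding \<phi>_def by (rule sum.cong) (use I prod_indicator in auto)
  also have "\<dots> = (\<Prod>i\<in>I. \<Sum>v\<in>bbox (C i). if H i v = y i then 1 else 0)"
    by (rule block_sum[OF I C disj]) auto
  also have "\<dots> = (\<Prod>i\<in>I. real (card {v\<in>bbox (C i). H i v = y i}))"
    by (rule prod.cong) (use C in \<open>auto simp: card_filter_sum\<close>)
  finally have cnt: "real (card {u\<in>bbox ?L. \<phi> u}) = (\<Prod>i\<in>I. real (card {v\<in>bbox (C i). H i v = y i}))" .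
  have cL: "card ?L = (\<Sum>i\<in>I. card (C i))"
    by (rule card_UN_disjoint) (use I C disj in auto)
  have pL: "(2::real) ^ card ?L = (\<Prod>i\<in>I. 2 ^ card (C i))"
    unfolding cL by (simp add: power_sum)
  have lhs: "real (card {x\<in>?A. \<forall>i\<in>I. P i x = y i}) / real (card ?A) =
             (\<Prod>i\<in>I. real (card {v\<in>bbox (C i). H i v = y i})) / (\<Prod>i\<in>I. 2 ^ card (C i))"
  proof -
    have "(\<Prod>i\<in>I. (2::real) ^ card (C i)) > 0" by (simp add: prod_pos)
    then show ?thesis
      using pattern_count[OF W fL ind, of b \<phi>] cA unfolding e1 cnt pL by (simp add: field_simps)
  qed
  have rhs: "real (card {x\<in>?A. P i x = y i}) / real (card ?A) = real (card {v\<in>bbox (C i). H i v = y i}) / 2 ^ card (C i)"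
    if i: "i \<in> I" for i
  proof -
    have indi: "indep m a W (C i)" using indep_mono[OF ind] i by auto
    have "{x\<in>?A. P i x = y i} = {x\<in>?A. (\<lambda>v. H i v = y i) (restr (C i) (\<lambda>p. par (a p) x))}"
      using H i by auto
    then show ?thesis using pattern_count[OF W C[OF i] indi, of b "\<lambda>v. H i v = y i"] cA
      by (simp add: field_simps)
  qed
  show ?thesis unfolding lhs using rhs by (simp add: prod_dividef)
qed

definition fn_of :: "nat \<Rightarrow> ('p \<Rightarrow> nat \<Rightarrow> bool) \<Rightarrow> 'p set \<Rightarrow> ((nat \<Rightarrow> bool) \<Rightarrow> bool) \<Rightarrow> bool" where
  "fn_of m a S Pf \<longleftrightarrow> (\<exists>G. \<forall>x\<in>cube m. Pf x = G (restr S (\<lambda>p. par (a p) x)))"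

lemma card_group:
  assumes "finite S" "finite T" "g ` S \<subseteq> T"
  shows "real (card S) = (\<Sum>t\<in>T. real (card {x\<in>S. g x = t}))"
  using sum.group[OF assms, of "\<lambda>_. (1::real)"] by simp

lemma sum_min_le:
  fixes f g :: "'a \<Rightarrow> real"
  shows "(\<Sum>x\<in>A. min (f x) (g x)) \<le> min (sum f A) (sum g A)"
  by (simp add: sum_mono)

lemma min_le_sqrt:
  fixes a b :: real
  assumes "a \<ge> 0" "b \<ge> 0"
  shows "min a b \<le> sqrt (a * b)"
proof (rule real_le_rsqrt)
  show "(min a b)\<^sup>2 \<le> a * b"
    using assms by (cases "a \<le> b") (auto simp: power2_eq_square intro: mult_mono)
qed

lemma min_sum_sqrt:
  fixes \<alpha> :: "'b \<Rightarrow> real"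
  assumes "finite B" "\<And>b. b \<in> B \<Longrightarrow> \<alpha> b \<ge> 0" "\<beta> \<ge> 0"
  shows "min (\<Sum>b\<in>B. \<alpha> b) \<beta> \<le> (\<Sum>b\<in>B. sqrt (\<alpha> b * \<beta>))"
  using assms
proof (induction B rule: finite_induct)
  case empty then show ?case by simp
next
  case (insert x F)
  have "min (\<Sum>b\<in>insert x F. \<alpha> b) \<beta> = min (\<alpha> x + (\<Sum>b\<in>F. \<alpha> b)) \<beta>" using insert by simp
  also have "\<dots> \<le> min (\<alpha> x) \<beta> + min (\<Sum>b\<in>F. \<alpha> b) \<beta>"
  proof -
    have "sum \<alpha> F \<ge> 0" by (rule sum_nonneg) (use insert.prems in auto)
    moreover have "\<alpha> x \<ge> 0" using insert.prems by auto
    ultimately show ?thesis using insert.prems(2) by (auto simp: min_def)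
  qed
  also have "\<dots> \<le> sqrt (\<alpha> x * \<beta>) + (\<Sum>b\<in>F. sqrt (\<alpha> b * \<beta>))"
    using insert by (intro add_mono min_le_sqrt) auto
  finally show ?case using insert by simp
qed

lemma ber_vals[simp]: "ber (1/3) True = 1/3" "ber (1/3) False = 2/3"
  unfolding ber_def by auto

lemma joint_cube: "joint n P x \<in> cube n"
  unfolding joint_def cube_def by auto

lemma marginal:
  assumes I: "I \<subseteq> {..<n}"
  shows "(\<Sum>z\<in>cube n. min (distr_unif (cube m) (joint n P) z) (ber_prod n (1/3) z)) \<le>
    (\<Sum>y\<in>bbox I. min (real (card {x\<in>cube m. \<forall>i\<in>I. P i x = y i}) / real (card (cube m)))
                      (\<Prod>i\<in>I. ber (1/3) (y i)))"
proof -
  have fI: "finite I" using I finite_subset by blast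
  let ?Pd = "distr_unif (cube m) (joint n P)"
  let ?Qd = "ber_prod n (1/3)"
  let ?F = "\<lambda>y. {z\<in>cube n. restr I z = y}"
  have "(\<Sum>z\<in>cube n. min (?Pd z) (?Qd z)) = (\<Sum>y\<in>bbox I. \<Sum>z\<in>?F y. min (?Pd z) (?Qd z))"
    by (rule sum.group[symmetric]) (use fI in auto)
  also have "\<dots> \<le> (\<Sum>y\<in>bbox I. min (\<Sum>z\<in>?F y. ?Pd z) (\<Sum>z\<in>?F y. ?Qd z))"
    by (intro sum_mono sum_min_le)
  also have "\<dots> = (\<Sum>y\<in>bbox I. min (real (card {x\<in>cube m. \<forall>i\<in>I. P i x = y i}) / real (card (cube m)))
                      (\<Prod>i\<in>I. ber (1/3) (y i)))"
  proof (rule sum.cong[OF refl])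
    fix y assume y: "y \<in> bbox I"
    let ?S = "{x\<in>cube m. restr I (joint n P x) = y}"
    have "(\<Sum>z\<in>?F y. real (card {x\<in>cube m. joint n P x = z})) = (\<Sum>z\<in>?F y. real (card {x\<in>?S. joint n P x = z}))"
      by (intro sum.cong refl arg_cong[where f="\<lambda>S. real (card S)"]) auto
    also have "\<dots> = real (card ?S)"
      by (rule card_group[symmetric]) (auto simp: joint_cube)
    also have "?S = {x\<in>cube m. \<forall>i\<in>I. P i x = y i}"
      using restr_bbox_eq[OF y] I unfolding joint_def by auto
    finally have e1: "(\<Sum>z\<in>?F y. ?Pd z) = real (card {x\<in>cube m. \<forall>i\<in>I. P i x = y i}) / real (card (cube m))"
      unfolding distr_unif_def by (simp add: sum_divide_distrib[symmetric])
    define f where "f = (\<lambda>i t. if i \<in> I \<and> t \<noteq> y i then 0 else ber (1/3) t)"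
    have "(\<Sum>z\<in>?F y. ?Qd z) = (\<Sum>z\<in>cube n. if restr I z = y then ?Qd z else 0)"
      by (simp add: sum.inter_filter)
    also have "\<dots> = (\<Sum>z\<in>bbox {..<n}. \<Prod>i\<in>{..<n}. f i (z i))"
      unfolding cube_bbox
    proof (rule sum.cong[OF refl])
      fix z assume z: "z \<in> bbox {..<n}"
      show "(if restr I z = y then ?Qd z else 0) = (\<Prod>i\<in>{..<n}. f i (z i))"
      proof (cases "restr I z = y")
        case True
        then have "\<forall>i\<in>I. z i = y i" using restr_bbox_eq[OF y] by auto
        then show ?thesis using True unfolding ber_prod_def f_def by (auto intro!: prod.cong)
      next
        case False
        then obtain i where i: "i \<in> I" "z i \<noteq> y i" using restr_bbox_eq[OF y] by auto
        then have "f i (z i) = 0" unfolding f_def by auto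
        moreover have "i \<in> {..<n}" using i I by auto
        ultimately have "(\<Prod>i\<in>{..<n}. f i (z i)) = 0" by (intro prod_zero) auto
        then show ?thesis using False by simp
      qed
    qed
    also have "\<dots> = (\<Prod>i\<in>{..<n}. f i True + f i False)"
      by (rule sum_prod_bbox) simp
    also have "\<dots> = (\<Prod>i\<in>{..<n}. if i \<in> I then ber (1/3) (y i) else 1)"
      by (rule prod.cong) (auto simp: f_def)
    also have "\<dots> = (\<Prod>i\<in>{i\<in>{..<n}. i \<in> I}. ber (1/3) (y i))"
      by (rule prod.inter_filter[symmetric]) simp
    also have "{i\<in>{..<n}. i \<in> I} = I" using I by auto
    finally have e2: "(\<Sum>z\<in>?F y. ?Qd z) = (\<Prod>i\<in>I. ber (1/3) (y i))" .
    show "min (\<Sum>z\<in>?F y. ?Pd z) (\<Sum>z\<in>?F y. ?Qd z) = min (real (card {x\<in>cube m. \<forall>i\<in>I. P i x = y i}) / real (card (cube m)))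
                      (\<Prod>i\<in>I. ber (1/3) (y i))" unfolding e1 e2 ..
  qed
  finally show ?thesis .
qed

lemma cell_sub: "cell m a W b \<subseteq> cube m"
  unfolding cell_def by auto

lemma cell_bound:
  fixes P :: "nat \<Rightarrow> (nat \<Rightarrow> bool) \<Rightarrow> bool" and a :: "'p \<Rightarrow> nat \<Rightarrow> bool"
  assumes I: "I \<subseteq> {..<n}" and W: "finite W"
    and C: "\<And>i. i \<in> I \<Longrightarrow> finite (C i)"
    and disj: "\<And>i j. i \<in> I \<Longrightarrow> j \<in> I \<Longrightarrow> i \<noteq> j \<Longrightarrow> C i \<inter> C j = {}"
    and ind: "indep m a W (\<Union>i\<in>I. C i)"
    and fn: "\<And>i. i \<in> I \<Longrightarrow> fn_of m a (W \<union> C i) (P i)"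
    and rho: "\<rho> \<ge> 0"
    and bc: "\<And>i b. i \<in> I \<Longrightarrow> cell m a W b \<noteq> {} \<Longrightarrow>
        sqrt (real (card {x\<in>cell m a W b. P i x = True}) / real (card (cell m a W b)) * (1/3)) +
        sqrt (real (card {x\<in>cell m a W b. P i x = False}) / real (card (cell m a W b)) * (2/3)) \<le> \<rho>"
  shows "(\<Sum>z\<in>cube n. min (distr_unif (cube m) (joint n P) z) (ber_prod n (1/3) z)) \<le> 2 ^ card W * \<rho> ^ card I"
proof -
  have fI: "finite I" using I finite_subset by blast
  define M where "M = real (card (cube m))"
  have "cube m \<noteq> {}" using vzero_cube[of m] by blast
  then have M: "M > 0" unfolding M_def by (simp add: card_gt_0_iff)
  define Q where "Q = (\<lambda>y. \<Prod>i\<in>I. ber (1/3) (y i))"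
  have Q0: "Q y \<ge> 0" for y unfolding Q_def by (intro prod_nonneg) (auto simp: ber_def)
  define Nb where "Nb = (\<lambda>b y. real (card {x\<in>cell m a W b. \<forall>i\<in>I. P i x = y i}))"
  have Nsplit: "real (card {x\<in>cube m. \<forall>i\<in>I. P i x = y i}) = (\<Sum>b\<in>bbox W. Nb b y)" for y
  proof -
    have "real (card {x\<in>cube m. \<forall>i\<in>I. P i x = y i}) =
      (\<Sum>b\<in>bbox W. real (card {x\<in>{x\<in>cube m. \<forall>i\<in>I. P i x = y i}. restr W (\<lambda>p. par (a p) x) = b}))"
      by (rule card_group) (use W in auto)
    also have "\<dots> = (\<Sum>b\<in>bbox W. Nb b y)"
    proof (rule sum.cong[OF refl])
      fix b assume b: "b \<in> bbox W"
      have "{x\<in>{x\<in>cube m. \<forall>i\<in>I. P i x = y i}. restr W (\<lambda>p. par (a p) x) = b} = {x\<in>cell m a W b. \<forall>i\<in>I. P i x = y i}"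
        using restr_bbox_eq[OF b] unfolding cell_def by auto
      then show "real (card {x\<in>{x\<in>cube m. \<forall>i\<in>I. P i x = y i}. restr W (\<lambda>p. par (a p) x) = b}) = Nb b y"
        unfolding Nb_def by simp
    qed
    finally show ?thesis .
  qed
  have perb: "(\<Sum>y\<in>bbox I. sqrt (Nb b y / M * Q y)) \<le> \<rho> ^ card I" for b
  proof (cases "cell m a W b = {}")
    case True
    then show ?thesis unfolding Nb_def using rho by simp
  next
    case False
    let ?A = "cell m a W b"
    define A where "A = real (card ?A)"
    have fA: "finite ?A" using cell_sub finite_subset by (metis finite_cube)
    have A: "A > 0" unfolding A_def using fA False by (simp add: card_gt_0_iff)
    have AM: "A \<le> M" unfolding A_def M_def by (simp add: card_mono cell_sub)
    have "\<forall>i\<in>I. \<exists>H. \<forall>x\<in>?A. P i x = H (restr (C i) (\<lambda>p. par (a p) x))"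
    proof
      fix i assume i: "i \<in> I"
      obtain G where G: "\<forall>x\<in>cube m. P i x = G (restr (W \<union> C i) (\<lambda>p. par (a p) x))"
        using fn[OF i] unfolding fn_of_def by blast
      show "\<exists>H. \<forall>x\<in>?A. P i x = H (restr (C i) (\<lambda>p. par (a p) x))"
      proof (intro exI ballI)
        fix x assume x: "x \<in> ?A"
        have eq: "restr (W \<union> C i) (\<lambda>p. par (a p) x) = (\<lambda>p. if p \<in> W then b p else restr (C i) (\<lambda>p. par (a p) x) p)"
          using x unfolding cell_def restr_def by auto
        have xc: "x \<in> cube m" using x cell_sub by blast
        have "P i x = G (restr (W \<union> C i) (\<lambda>p. par (a p) x))" using G xc by blast
        then show "P i x = (\<lambda>v. G (\<lambda>p. if p \<in> W then b p else v p)) (restr (C i) (\<lambda>p. par (a p) x))"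
          by (simp only: eq)
      qed
    qed
    then obtain H where H: "\<And>i x. i \<in> I \<Longrightarrow> x \<in> ?A \<Longrightarrow> P i x = H i (restr (C i) (\<lambda>p. par (a p) x))"
      by metis
    define Ni where "Ni = (\<lambda>i t. real (card {x\<in>?A. P i x = t}))"
    define f where "f = (\<lambda>i t. sqrt (Ni i t / A * ber (1/3) t))"
    have "sqrt (Nb b y / M * Q y) = sqrt (A / M) * (\<Prod>i\<in>I. f i (y i))" for y
    proof -
      have "Nb b y / A = (\<Prod>i\<in>I. Ni i (y i) / A)"
        unfolding Nb_def A_def Ni_def
        by (rule cell_indep[where P=P and H=H and b=b and y=y, OF W fI C disj ind H False])
      then have nb: "Nb b y = A * (\<Prod>i\<in>I. Ni i (y i) / A)" using A by (simp add: field_simps)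
      have p: "(\<Prod>i\<in>I. Ni i (y i) / A * ber (1/3) (y i)) = (\<Prod>i\<in>I. Ni i (y i) / A) * Q y"
        unfolding Q_def by (rule prod.distrib)
      have "Nb b y / M * Q y = (A / M) * ((\<Prod>i\<in>I. Ni i (y i) / A) * Q y)"
        unfolding nb using M by simp
      then have e: "Nb b y / M * Q y = (A / M) * (\<Prod>i\<in>I. Ni i (y i) / A * ber (1/3) (y i))"
        by (simp only: p)
      show ?thesis unfolding f_def e real_sqrt_mult sqrt_prod[OF fI] ..
    qed
    then have "(\<Sum>y\<in>bbox I. sqrt (Nb b y / M * Q y)) = sqrt (A / M) * (\<Sum>y\<in>bbox I. \<Prod>i\<in>I. f i (y i))"
      by (simp add: sum_distrib_left)
    also have "\<dots> = sqrt (A / M) * (\<Prod>i\<in>I. f i True + f i False)"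
      by (simp add: sum_prod_bbox[OF fI])
    also have "\<dots> \<le> 1 * \<rho> ^ card I"
    proof (rule mult_mono)
      show "sqrt (A / M) \<le> 1" using A M AM by simp
      have "(\<Prod>i\<in>I. f i True + f i False) \<le> (\<Prod>i\<in>I. \<rho>)"
      proof (rule prod_mono)
        fix i assume i: "i \<in> I"
        show "0 \<le> f i True + f i False \<and> f i True + f i False \<le> \<rho>"
          using bc[OF i False] unfolding f_def Ni_def A_def by simp
      qed
      then show "(\<Prod>i\<in>I. f i True + f i False) \<le> \<rho> ^ card I" by simp
      show "0 \<le> (\<Prod>i\<in>I. f i True + f i False)" using A unfolding f_def Ni_def by (intro prod_nonneg) simp
    qed simp
    finally show ?thesis by simp
  qed
  have "(\<Sum>z\<in>cube n. min (distr_unif (cube m) (joint n P) z) (ber_prod n (1/3) z)) \<le>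
    (\<Sum>y\<in>bbox I. min (real (card {x\<in>cube m. \<forall>i\<in>I. P i x = y i}) / M) (Q y))"
    unfolding M_def Q_def by (rule marginal[OF I])
  also have "\<dots> \<le> (\<Sum>y\<in>bbox I. \<Sum>b\<in>bbox W. sqrt (Nb b y / M * Q y))"
  proof (rule sum_mono)
    fix y
    have "real (card {x\<in>cube m. \<forall>i\<in>I. P i x = y i}) / M = (\<Sum>b\<in>bbox W. Nb b y / M)"
      unfolding Nsplit by (simp add: sum_divide_distrib)
    then show "min (real (card {x\<in>cube m. \<forall>i\<in>I. P i x = y i}) / M) (Q y) \<le> (\<Sum>b\<in>bbox W. sqrt (Nb b y / M * Q y))"
      using min_sum_sqrt[of "bbox W" "\<lambda>b. Nb b y / M" "Q y"] W M Q0 unfolding Nb_def by simp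
  qed
  also have "\<dots> = (\<Sum>b\<in>bbox W. \<Sum>y\<in>bbox I. sqrt (Nb b y / M * Q y))"
    by (rule sum.swap)
  also have "\<dots> \<le> (\<Sum>b\<in>bbox W. \<rho> ^ card I)"
    by (rule sum_mono) (rule perb)
  also have "\<dots> = 2 ^ card W * \<rho> ^ card I"
    using card_bbox[OF W] by simp
  finally show ?thesis .
qed

lemma cell_affine:
  assumes x0: "x0 \<in> cell m a W b"
  shows "\<exists>V h. lin_subspace m V \<and> h \<in> cube m \<and> affine_sub m V h = cell m a W b"
proof -
  define V where "V = {x\<in>cube m. \<forall>p\<in>W. \<not> par (a p) x}"
  have x0c: "x0 \<in> cube m" using x0 unfolding cell_def by auto
  have "lin_subspace m V"
    unfolding lin_subspace_def V_def by (auto simp: par_vadd)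
  moreover have "affine_sub m V x0 = cell m a W b"
  proof
    show "affine_sub m V x0 \<subseteq> cell m a W b"
      using x0 x0c unfolding affine_sub_def V_def cell_def by (auto simp: par_vadd)
    show "cell m a W b \<subseteq> affine_sub m V x0"
    proof
      fix x assume x: "x \<in> cell m a W b"
      then have xc: "x \<in> cube m" unfolding cell_def by auto
      have "vadd x x0 \<in> V" using x x0 xc x0c unfolding V_def cell_def by (auto simp: par_vadd)
      then show "x \<in> affine_sub m V x0" unfolding affine_sub_def
        by (intro image_eqI[of _ _ "vadd x x0"]) auto
    qed
  qed
  ultimately show ?thesis using x0c by blast
qed

lemma tv_bool:
  assumes A: "finite A" "A \<noteq> {}"
  shows "tv UNIV (distr_unif A f) (ber (1/3)) = \<bar>real (card {x\<in>A. f x}) / real (card A) - 1/3\<bar>"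
proof -
  have cA: "real (card A) > 0" using A by (simp add: card_gt_0_iff)
  have "card {x\<in>A. f x} + card {x\<in>A. \<not> f x} = card A"
  proof -
    have "{x\<in>A. f x} \<union> {x\<in>A. \<not> f x} = A" by auto
    moreover have "card ({x\<in>A. f x} \<union> {x\<in>A. \<not> f x}) = card {x\<in>A. f x} + card {x\<in>A. \<not> f x}"
      by (rule card_Un_disjoint) (use A in auto)
    ultimately show ?thesis by simp
  qed
  then have s: "real (card {x\<in>A. \<not> f x}) / real (card A) = 1 - real (card {x\<in>A. f x}) / real (card A)"
    using cA by (simp add: field_simps flip: of_nat_add)
  have e1: "{y\<in>A. f y = True} = {x\<in>A. f x}" "{y\<in>A. f y = False} = {x\<in>A. \<not> f x}" by auto
  show ?thesis
    unfolding tv_def distr_unif_def UNIV_bool using s by (simp add: e1 ber_def abs_minus_commute)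
qed

lemma one_minus_le_powr:
  fixes t :: real
  assumes "t \<ge> 0"
  shows "1 - t \<le> 2 powr (-t)"
proof -
  have "1 + (-t * ln 2) \<le> exp (-t * ln 2)" by (rule exp_ge_add_one_self)
  moreover have "t * ln 2 \<le> t" using assms ln_2_less_1 by (simp add: mult_left_le)
  moreover have "2 powr (-t) = exp (-t * ln 2)" by (simp add: powr_def)
  ultimately show ?thesis by linarith
qed

lemma bc_bound:
  fixes q \<delta> :: real
  assumes q: "0 \<le> q" "q \<le> 1" and d: "0 < \<delta>" "\<delta> \<le> \<bar>q - 1/3\<bar>"
  shows "sqrt (q * (1/3)) + sqrt ((1 - q) * (2/3)) \<le> 2 powr (-(\<delta>\<^sup>2/2))"
proof -
  define a where "a = sqrt q"
  define b where "b = sqrt (1 - q)"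
  define \<alpha> where "\<alpha> = sqrt (1/3::real)"
  define \<beta> where "\<beta> = sqrt (2/3::real)"
  have a2: "a^2 = q" unfolding a_def using q by simp
  have b2: "b^2 = 1 - q" unfolding b_def using q by simp
  have al2: "\<alpha>^2 = 1/3" unfolding \<alpha>_def by simp
  have be2: "\<beta>^2 = 2/3" unfolding \<beta>_def by simp
  have nn: "a \<ge> 0" "b \<ge> 0" "\<alpha> \<ge> 0" "\<beta> \<ge> 0" unfolding a_def b_def \<alpha>_def \<beta>_def using q by auto
  have BC: "sqrt (q * (1/3)) + sqrt ((1 - q) * (2/3)) = a * \<alpha> + b * \<beta>"
    unfolding a_def b_def \<alpha>_def \<beta>_def by (simp only: real_sqrt_mult)
  have id1: "(a*\<alpha> + b*\<beta>)^2 + (a*\<beta> - b*\<alpha>)^2 = 1"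
  proof -
    have "(a*\<alpha> + b*\<beta>)^2 + (a*\<beta> - b*\<alpha>)^2 = (a^2 + b^2) * (\<alpha>^2 + \<beta>^2)"
      by (simp add: power2_eq_square algebra_simps)
    then show ?thesis using a2 b2 al2 be2 by simp
  qed
  have id2: "(a*\<beta> + b*\<alpha>)^2 + (a*\<alpha> - b*\<beta>)^2 = 1"
  proof -
    have "(a*\<beta> + b*\<alpha>)^2 + (a*\<alpha> - b*\<beta>)^2 = (a^2 + b^2) * (\<alpha>^2 + \<beta>^2)"
      by (simp add: power2_eq_square algebra_simps)
    then show ?thesis using a2 b2 al2 be2 by simp
  qed
  have "0 \<le> (a*\<alpha> - b*\<beta>)^2" by simp
  then have le1: "(a*\<beta> + b*\<alpha>)^2 \<le> 1" using id2 by linarith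
  have qd: "q - 1/3 = (a*\<beta> - b*\<alpha>) * (a*\<beta> + b*\<alpha>)"
  proof -
    have "(a*\<beta> - b*\<alpha>) * (a*\<beta> + b*\<alpha>) = a^2 * \<beta>^2 - b^2 * \<alpha>^2"
      by (simp add: power2_eq_square algebra_simps)
    also have "\<dots> = q * (2/3) - (1 - q) * (1/3)" by (simp only: a2 b2 al2 be2)
    also have "\<dots> = q - 1/3" by (simp add: field_simps)
    finally show ?thesis by simp
  qed
  have "(q - 1/3)^2 = (a*\<beta> - b*\<alpha>)^2 * (a*\<beta> + b*\<alpha>)^2" unfolding qd by (simp add: power_mult_distrib)
  also have "\<dots> \<le> (a*\<beta> - b*\<alpha>)^2 * 1" by (intro mult_left_mono le1) simp
  finally have "(q - 1/3)^2 \<le> (a*\<beta> - b*\<alpha>)^2" by simp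
  moreover have "\<delta>^2 \<le> (q - 1/3)^2"
    using d by (metis abs_ge_zero less_imp_le power2_abs power_mono)
  ultimately have bc2: "(a*\<alpha> + b*\<beta>)^2 \<le> 1 - \<delta>^2" using id1 by linarith
  have d1: "\<delta> \<le> 1" using d q by linarith
  then have "\<delta>^2 \<le> 1" using d by (simp add: power_le_one)
  have sq: "(1 - \<delta>^2/2)^2 = 1 - \<delta>^2 + (\<delta>^2)^2/4" by (simp add: power2_eq_square algebra_simps)
  have "0 \<le> (\<delta>^2)^2" by simp
  then have "(a*\<alpha> + b*\<beta>)^2 \<le> (1 - \<delta>^2/2)^2"
    using bc2 sq by linarith
  moreover have "0 \<le> 1 - \<delta>^2/2" using \<open>\<delta>^2 \<le> 1\<close> by simp
  ultimately have "a*\<alpha> + b*\<beta> \<le> 1 - \<delta>^2/2" by (rule power2_le_imp_le)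
  also have "\<dots> \<le> 2 powr (-(\<delta>^2/2))" by (rule one_minus_le_powr) simp
  finally show ?thesis unfolding BC .
qed

lemma const_bound:
  fixes q :: real
  assumes "q = 0 \<or> q = 1"
  shows "sqrt (q * (1/3)) + sqrt ((1 - q) * (2/3)) \<le> 2 powr (-(1/4))"
proof -
  have "sqrt (q * (1/3)) + sqrt ((1 - q) * (2/3)) \<le> sqrt (2/3)"
    using assms by auto
  also have "sqrt (2/3) \<le> 2 powr (-(1/4))"
  proof -
    have "(2 powr (-(1/4)::real)) ^ 4 = (2 powr (-(1/4))) powr (real 4)"
      using powr_realpow[of "2 powr (-(1/4)::real)" 4] by simp
    also have "\<dots> = 2 powr (-1)" by (simp add: powr_powr)
    also have "\<dots> = 1/2" by (simp add: powr_minus)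
    finally have h1: "(2 powr (-(1/4)::real)) ^ 4 = 1/2" .
    have "sqrt (2/3::real) ^ (2*2) = (sqrt (2/3) ^ 2) ^ 2" by (rule power_mult)
    then have h2: "sqrt (2/3::real) ^ 4 = 4/9" by (simp add: power2_eq_square)
    have h4: "sqrt (2/3::real) ^ 4 \<le> (2 powr (-(1/4)::real)) ^ 4" unfolding h1 h2 by simp
    have s34: "Suc 3 = 4" by simp
    have h: "sqrt (2/3::real) ^ Suc 3 \<le> (2 powr (-(1/4)::real)) ^ Suc 3"
      unfolding s34 by (rule h4)
    show ?thesis by (rule power_le_imp_le_base[OF h]) simp
  qed
  finally show ?thesis .
qed

definition row :: "nat \<Rightarrow> nat \<Rightarrow> (nat \<times> nat) set" where
  "row r i = {i} \<times> {..<r}"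

lemma finite_row[simp]: "finite (row r i)" unfolding row_def by simp

lemma row_disj: "i \<noteq> j \<Longrightarrow> row r i \<inter> row r j = {}" unfolding row_def by auto

lemma fn_mono:
  assumes "fn_of m a S Pf" "S \<subseteq> S'"
  shows "fn_of m a S' Pf"
proof -
  obtain G where G: "\<forall>x\<in>cube m. Pf x = G (restr S (\<lambda>p. par (a p) x))" using assms unfolding fn_of_def by blast
  have rr: "restr S (restr S' v) = restr S v" for v using assms(2) unfolding restr_def by auto
  show ?thesis unfolding fn_of_def
  proof (intro exI ballI)
    fix x assume x: "x \<in> cube m"
    show "Pf x = (\<lambda>v. G (restr S v)) (restr S' (\<lambda>p. par (a p) x))" using G x rr by simp
  qed
qed

lemma fn_reduce:
  assumes fn: "fn_of m a S Pf" and p0: "p0 \<in> S" and T: "finite T" "T \<subseteq> S - {p0}"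
    and eq: "\<And>x. x \<in> cube m \<Longrightarrow> par (a p0) x = odd (card {t\<in>T. par (a t) x})"
  shows "fn_of m a (S - {p0}) Pf"
proof -
  obtain G where G: "\<forall>x\<in>cube m. Pf x = G (restr S (\<lambda>p. par (a p) x))" using fn unfolding fn_of_def by blast
  show ?thesis unfolding fn_of_def
  proof (intro exI ballI)
    fix x assume x: "x \<in> cube m"
    show "Pf x = (\<lambda>v. G (v(p0 := odd (card {t\<in>T. v t})))) (restr (S - {p0}) (\<lambda>p. par (a p) x))"
  proof -
    have "{t\<in>T. restr (S - {p0}) (\<lambda>p. par (a p) x) t} = {t\<in>T. par (a t) x}"
      using T unfolding restr_def by auto
    then have "(restr (S - {p0}) (\<lambda>p. par (a p) x))(p0 := odd (card {t\<in>T. restr (S - {p0}) (\<lambda>p. par (a p) x) t}))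
        = restr S (\<lambda>p. par (a p) x)"
      using eq[OF x] p0 unfolding restr_def by (auto simp: fun_eq_iff)
    then show ?thesis using G x by simp
  qed
  qed
qed

lemma frac_split:
  assumes A: "finite A" "A \<noteq> {}"
  shows "real (card {x\<in>A. Pf x = False}) / real (card A) = 1 - real (card {x\<in>A. Pf x}) / real (card A)"
proof -
  have cA: "real (card A) > 0" using A by (simp add: card_gt_0_iff)
  have "{x\<in>A. Pf x} \<union> {x\<in>A. \<not> Pf x} = A" by auto
  moreover have "card ({x\<in>A. Pf x} \<union> {x\<in>A. \<not> Pf x}) = card {x\<in>A. Pf x} + card {x\<in>A. \<not> Pf x}"
    by (rule card_Un_disjoint) (use A in auto)
  ultimately have "card {x\<in>A. Pf x} + card {x\<in>A. \<not> Pf x} = card A" by simp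
  then show ?thesis using cA by (simp add: field_simps flip: of_nat_add)
qed

lemma pow_conv:
  "(2::real) ^ w * (2 powr (-s)) ^ t = 2 powr (real w - s * real t)"
proof -
  have "(2::real) ^ w = 2 powr real w" by (simp add: powr_realpow)
  moreover have "(2 powr (-s)) ^ t = (2 powr (-s)) powr real t" by (simp add: powr_realpow)
  moreover have "\<dots> = 2 powr (-s * real t)" by (simp add: powr_powr)
  ultimately show ?thesis by (simp add: powr_add[symmetric])
qed

locale setup8 =
  fixes m n r :: nat and \<delta> :: real and P :: "nat \<Rightarrow> (nat \<Rightarrow> bool) \<Rightarrow> bool"
    and a :: "nat \<times> nat \<Rightarrow> nat \<Rightarrow> bool"
  assumes r1: "1 \<le> r" and dpos: "\<delta> > 0" and d1: "\<delta> \<le> 1"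
    and rep: "\<And>i. i < n \<Longrightarrow> fn_of m a (row r i) (P i)"
    and hyp: "\<And>i V h. i < n \<Longrightarrow> lin_subspace m V \<Longrightarrow> h \<in> cube m \<Longrightarrow>
       tv UNIV (distr_unif (affine_sub m V h) (P i)) (ber (1/3)) \<ge> \<delta>"
begin

definition "\<beta> = \<delta>\<^sup>2 / 8"
definition "eps k = \<beta> ^ k / (2 * \<delta>\<^sup>2 * fact k)"
definition "g k = (\<Sum>j\<in>{k<..r}. real j * eps j)"
definition "\<alpha> = (1/64) ^ r * \<delta> ^ (2 * r) / fact r"
definition "SM = (\<Sum>z\<in>cube n. min (distr_unif (cube m) (joint n P) z) (ber_prod n (1/3) z))"

lemma eps_nonneg: "eps k \<ge> 0" unfolding eps_def \<beta>_def by simp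

lemma eps_rec: "real (Suc k) * eps (Suc k) = \<beta> * eps k"
  unfolding eps_def by (simp add: field_simps del: of_nat_Suc)

lemma g_rec: "k < r \<Longrightarrow> g k = g (Suc k) + real (Suc k) * eps (Suc k)"
proof -
  assume k: "k < r"
  have "{k<..r} = insert (Suc k) {Suc k<..r}" using k by auto
  then show ?thesis unfolding g_def by simp
qed

lemma g_bound: "1 \<le> k \<Longrightarrow> k \<le> r \<Longrightarrow> g k \<le> \<delta>\<^sup>2 * eps k / 4"
proof -
  assume "1 \<le> k" "k \<le> r"
  from \<open>k \<le> r\<close> show ?thesis
  proof (induction k rule: inc_induct)
    case base
    have "g r = 0" unfolding g_def by simp
    then show ?case using eps_nonneg[of r] by simp
  next
    case (step k)
    have d2: "\<delta>\<^sup>2 \<le> 1" using dpos d1 by (simp add: power_le_one)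
    have e1: "eps (Suc k) = \<beta> * eps k / real (Suc k)"
      using eps_rec[of k] by (simp add: field_simps del: of_nat_Suc)
    have "g k = g (Suc k) + \<beta> * eps k" using g_rec[OF step(2)] eps_rec[of k] by simp
    also have "\<dots> \<le> \<delta>\<^sup>2 * eps (Suc k) / 4 + \<beta> * eps k" using step(3) by simp
    also have "\<delta>\<^sup>2 * eps (Suc k) / 4 \<le> \<beta> * eps k"
    proof -
      have "\<delta>\<^sup>2 * eps (Suc k) / 4 = (\<delta>\<^sup>2 / (4 * real (Suc k))) * (\<beta> * eps k)"
        unfolding e1 by (simp add: field_simps)
      also have "\<dots> \<le> 1 * (\<beta> * eps k)"
        using d2 eps_nonneg[of k] by (intro mult_right_mono) (auto simp: \<beta>_def field_simps)
      finally show ?thesis by simp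
    qed
    finally show ?case unfolding \<beta>_def by (simp add: ac_simps)
  qed
qed

lemma g0: "g 0 \<le> 1/8"
proof -
  have "g 0 = g 1 + eps 1" using g_rec[of 0] r1 by simp
  moreover have "eps 1 = 1/16" unfolding eps_def \<beta>_def using dpos by simp
  moreover have "g 1 \<le> \<delta>\<^sup>2 * eps 1 / 4" using g_bound[of 1] r1 by simp
  moreover have "\<delta>\<^sup>2 \<le> 1" using dpos d1 by (simp add: power_le_one)
  moreover have "\<delta>\<^sup>2 * eps 1 \<le> 1 * eps 1" using eps_nonneg[of 1] \<open>\<delta>\<^sup>2 \<le> 1\<close> by (intro mult_right_mono) auto
  ultimately show ?thesis by linarith
qed

lemma alpha_le: "1 \<le> k \<Longrightarrow> k \<le> r \<Longrightarrow> \<alpha> \<le> \<delta>\<^sup>2 * eps k / 4"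
proof -
  assume k: "1 \<le> k" "k \<le> r"
  define h where "h = (\<lambda>k. \<beta> ^ k / fact k)"
  have "\<delta>\<^sup>2 \<le> 1" using dpos d1 by (simp add: power_le_one)
  then have b1: "\<beta> \<le> 1" "\<beta> \<ge> 0" unfolding \<beta>_def by auto
  have dec: "h r \<le> h k"
    using k(2)
  proof (induction r rule: dec_induct)
    case base then show ?case by simp
  next
    case (step j)
    have "h (Suc j) = h j * (\<beta> / real (Suc j))" unfolding h_def by (simp add: field_simps)
    also have "\<dots> \<le> h j * 1"
      using b1 by (intro mult_left_mono) (auto simp: h_def field_simps)
    finally show ?case using step by simp
  qed
  have e: "\<delta>\<^sup>2 * eps k / 4 = h k / 8"
    unfolding eps_def h_def using dpos by (simp add: field_simps)
  moreover have al: "\<alpha> \<le> h r / 8"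
  proof -
    have "\<beta> ^ r = \<delta> ^ (2 * r) / 8 ^ r" unfolding \<beta>_def by (simp add: power_divide power_mult)
    then have hr: "h r / 8 = \<delta> ^ (2 * r) / (8 ^ Suc r * fact r)" unfolding h_def by simp
    have "(8::real) ^ Suc r \<le> 64 ^ r"
    proof -
      have "(8::real) ^ Suc r = 8 * 8 ^ r" by simp
      also have "\<dots> \<le> 8 ^ r * 8 ^ r"
      proof -
        have "(8::real) ^ 1 \<le> 8 ^ r" by (rule power_increasing) (use r1 in auto)
        then show ?thesis by (intro mult_right_mono) auto
      qed
      also have "\<dots> = 64 ^ r" by (simp flip: power_mult_distrib)
      finally show ?thesis .
    qed
    then have "\<delta> ^ (2 * r) / (64 ^ r * fact r) \<le> \<delta> ^ (2 * r) / (8 ^ Suc r * fact r)"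
      using dpos by (intro divide_left_mono mult_right_mono) auto
    moreover have "\<alpha> = \<delta> ^ (2 * r) / (64 ^ r * fact r)" unfolding \<alpha>_def by (simp add: power_one_over field_simps)
    ultimately show ?thesis using hr by simp
  qed
  ultimately show ?thesis using dec by linarith
qed

lemma alpha_le0: "\<alpha> \<le> 1/8"
proof -
  have "\<delta> ^ (2 * r) \<le> 1" using dpos d1 by (simp add: power_le_one)
  moreover have "(1/64::real) ^ r \<le> 1" by (simp add: power_le_one)
  moreover have "fact r \<ge> (1::real)" by simp
  moreover have "(1/64::real) ^ r \<le> (1/64) ^ 1" using r1 by (intro power_decreasing) auto
  ultimately have A: "(1/64::real) ^ r * \<delta> ^ (2 * r) \<le> 1/64 * 1"
    using dpos by (intro mult_mono) auto
  have "\<alpha> \<le> (1/64::real) ^ r * \<delta> ^ (2 * r) / 1" unfolding \<alpha>_def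
    using dpos \<open>fact r \<ge> (1::real)\<close> by (intro divide_left_mono) auto
  then have "\<alpha> \<le> 1/64" using A by simp
  then show ?thesis by simp
qed

end

context setup8
begin

lemma cell_fin: "finite (cell m a W b)"
  using cell_sub finite_subset by (metis finite_cube)

lemma hyp_cell:
  assumes i: "i < n" and ne: "cell m a W b \<noteq> {}"
  shows "\<delta> \<le> \<bar>real (card {x\<in>cell m a W b. P i x}) / real (card (cell m a W b)) - 1/3\<bar>"
proof -
  obtain x0 where "x0 \<in> cell m a W b" using ne by auto
  then obtain V h where V: "lin_subspace m V" "h \<in> cube m" "affine_sub m V h = cell m a W b"
    using cell_affine by blast
  have "\<delta> \<le> tv UNIV (distr_unif (cell m a W b) (P i)) (ber (1/3))"
    using hyp[OF i V(1,2)] V(3) by simp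
  then show ?thesis using tv_bool[OF cell_fin ne] by simp
qed

lemma bc_cell:
  assumes i: "i < n" and ne: "cell m a W b \<noteq> {}"
  shows "sqrt (real (card {x\<in>cell m a W b. P i x = True}) / real (card (cell m a W b)) * (1/3)) +
        sqrt (real (card {x\<in>cell m a W b. P i x = False}) / real (card (cell m a W b)) * (2/3)) \<le> 2 powr (-(\<delta>\<^sup>2/2))"
proof -
  let ?A = "cell m a W b"
  define q where "q = real (card {x\<in>?A. P i x}) / real (card ?A)"
  have cA: "real (card ?A) > 0" using cell_fin ne by (simp add: card_gt_0_iff)
  have "card {x\<in>?A. P i x} \<le> card ?A" by (rule card_mono[OF cell_fin]) auto
  then have q: "0 \<le> q" "q \<le> 1" unfolding q_def using cA by auto
  have e1: "real (card {x\<in>?A. P i x = True}) / real (card ?A) = q" unfolding q_def by simp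
  have e2: "real (card {x\<in>?A. P i x = False}) / real (card ?A) = 1 - q"
    unfolding q_def by (rule frac_split[OF cell_fin ne])
  show ?thesis unfolding e1 e2
    by (rule bc_bound[OF q dpos]) (use hyp_cell[OF i ne] in \<open>simp add: q_def\<close>)
qed

lemma const_cell:
  assumes fn: "fn_of m a W (P i)" and ne: "cell m a W b \<noteq> {}"
  shows "sqrt (real (card {x\<in>cell m a W b. P i x = True}) / real (card (cell m a W b)) * (1/3)) +
        sqrt (real (card {x\<in>cell m a W b. P i x = False}) / real (card (cell m a W b)) * (2/3)) \<le> 2 powr (-(1/4))"
proof -
  let ?A = "cell m a W b"
  obtain G where G: "\<forall>x\<in>cube m. P i x = G (restr W (\<lambda>p. par (a p) x))" using fn unfolding fn_of_def by blast
  have const: "P i x = G (restr W b)" if x: "x \<in> ?A" for x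
  proof -
    have eq: "restr W (\<lambda>p. par (a p) x) = restr W b" using x unfolding cell_def restr_def by auto
    have xc: "x \<in> cube m" using x cell_sub by blast
    have "P i x = G (restr W (\<lambda>p. par (a p) x))" using G xc by blast
    then show ?thesis unfolding eq .
  qed
  define q where "q = real (card {x\<in>?A. P i x}) / real (card ?A)"
  have cA: "real (card ?A) > 0" using cell_fin ne by (simp add: card_gt_0_iff)
  have q01: "q = 0 \<or> q = 1"
  proof (cases "G (restr W b)")
    case True
    then have e: "{x\<in>?A. P i x} = ?A" using const by auto
    show ?thesis unfolding q_def e using cA by simp
  next
    case False
    then have e: "{x\<in>?A. P i x} = {}" using const by auto
    show ?thesis unfolding q_def e by simp
  qed
  have e1: "real (card {x\<in>?A. P i x = True}) / real (card ?A) = q" unfolding q_def by simp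
  have e2: "real (card {x\<in>?A. P i x = False}) / real (card ?A) = 1 - q"
    unfolding q_def by (rule frac_split[OF cell_fin ne])
  show ?thesis unfolding e1 e2 by (rule const_bound[OF q01])
qed

lemma indep_empty: "indep m a W {}"
  unfolding indep_def by auto

lemma row_sub: "j < n \<Longrightarrow> row r j \<subseteq> {..<n} \<times> {..<r}"
  unfolding row_def by auto

lemma stage:
  "k \<le> r \<Longrightarrow> W \<subseteq> {..<n} \<times> {..<r} \<Longrightarrow> real (card W) \<le> g k * real n \<Longrightarrow>
   (\<forall>j<n. \<exists>D. D \<subseteq> row r j \<and> card D \<le> k \<and> fn_of m a (W \<union> D) (P j)) \<Longrightarrow>
   SM \<le> 2 powr (-(\<alpha> * real n))"
proof (induction k arbitrary: W)
  case 0
  have fW: "finite W" by (rule finite_subset[OF 0(2)]) simp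
  have fn0: "fn_of m a W (P j)" if j: "j < n" for j
  proof -
    obtain D where D: "D \<subseteq> row r j" "card D \<le> 0" "fn_of m a (W \<union> D) (P j)" using 0(4) j by blast
    have "finite D" by (rule finite_subset[OF D(1)]) simp
    then have "D = {}" using D(2) by simp
    then show ?thesis using D(3) by simp
  qed
  have "SM \<le> 2 ^ card W * (2 powr (-(1/4))) ^ card {..<n}"
    unfolding SM_def
  proof (rule cell_bound[where I="{..<n}" and W=W and C="\<lambda>_. {}" and \<rho>="2 powr (-(1/4))" and P=P and a=a and m=m and n=n])
    show "indep m a W (\<Union>i\<in>{..<n}. {})" using indep_empty by simp
    show "\<And>i. i \<in> {..<n} \<Longrightarrow> fn_of m a (W \<union> {}) (P i)" using fn0 by simp
    show "\<And>i b. i \<in> {..<n} \<Longrightarrow> cell m a W b \<noteq> {} \<Longrightarrow>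
        sqrt (real (card {x\<in>cell m a W b. P i x = True}) / real (card (cell m a W b)) * (1/3)) +
        sqrt (real (card {x\<in>cell m a W b. P i x = False}) / real (card (cell m a W b)) * (2/3)) \<le> 2 powr (-(1/4))"
      using const_cell fn0 by blast
  qed (use fW in auto)
  also have "\<dots> = 2 powr (real (card W) - 1/4 * real n)" by (simp add: pow_conv)
  also have "\<dots> \<le> 2 powr (-(\<alpha> * real n))"
  proof (rule powr_mono)
    have "g 0 * real n \<le> 1/8 * real n" using g0 by (intro mult_right_mono) auto
    moreover have "\<alpha> * real n \<le> 1/8 * real n" using alpha_le0 by (intro mult_right_mono) auto
    ultimately show "real (card W) - 1/4 * real n \<le> -(\<alpha> * real n)" using 0(3) by linarith
  qed simp
  finally show ?case .
next
  case (Suc k)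
  have fW: "finite W" by (rule finite_subset[OF Suc.prems(2)]) simp
  have ex: "\<forall>j. \<exists>D. j < n \<longrightarrow> D \<subseteq> row r j \<and> card D \<le> Suc k \<and> fn_of m a (W \<union> D) (P j)"
    using Suc.prems(4) by blast
  obtain C where C0: "\<forall>j. j < n \<longrightarrow> C j \<subseteq> row r j \<and> card (C j) \<le> Suc k \<and> fn_of m a (W \<union> C j) (P j)"
    using choice[OF ex] by blast
  have C: "\<And>j. j < n \<Longrightarrow> C j \<subseteq> row r j \<and> card (C j) \<le> Suc k \<and> fn_of m a (W \<union> C j) (P j)"
    using C0 by blast
  have fC: "finite (C j)" if "j < n" for j
  proof (rule finite_subset)
    show "C j \<subseteq> row r j" using C[OF that] by blast
  qed simp
  have disjC: "C i \<inter> C j = {}" if "i < n" "j < n" "i \<noteq> j" for i j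
    using C[OF that(1)] C[OF that(2)] row_disj[OF that(3), of r] by blast
  define F where "F = {I. I \<subseteq> {..<n} \<and> indep m a W (\<Union>i\<in>I. C i)}"
  have fF: "finite F" unfolding F_def by (rule finite_subset[of _ "Pow {..<n}"]) auto
  have eF: "{} \<in> F" unfolding F_def using indep_empty by simp
  define Mx where "Mx = Max (card ` F)"
  have "Mx \<in> card ` F" unfolding Mx_def using fF eF by (intro Max_in) auto
  then obtain I where I: "I \<in> F" "card I = Mx" by auto
  have Imax: "card J \<le> card I" if "J \<in> F" for J
    using I(2) that fF unfolding Mx_def by simp
  have In: "I \<subseteq> {..<n}" and indI: "indep m a W (\<Union>i\<in>I. C i)" using I(1) unfolding F_def by auto
  have fI: "finite I" by (rule finite_subset[OF In]) simp
  define L where "L = (\<Union>i\<in>I. C i)"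
  have fL: "finite L" unfolding L_def using fI fC In by blast
  have ksr: "Suc k \<le> r" using Suc.prems(1) .
  show ?case
  proof (cases "eps (Suc k) * real n \<le> real (card I)")
    case True
    have "SM \<le> 2 ^ card W * (2 powr (-(\<delta>\<^sup>2/2))) ^ card I"
      unfolding SM_def
    proof (rule cell_bound[where I=I and W=W and C=C and \<rho>="2 powr (-(\<delta>\<^sup>2/2))" and P=P and a=a and m=m and n=n])
      show "\<And>i. i \<in> I \<Longrightarrow> finite (C i)" using fC In by blast
      show "\<And>i j. i \<in> I \<Longrightarrow> j \<in> I \<Longrightarrow> i \<noteq> j \<Longrightarrow> C i \<inter> C j = {}" using disjC In by blast
      show "\<And>i. i \<in> I \<Longrightarrow> fn_of m a (W \<union> C i) (P i)" using C In by blast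
      show "\<And>i b. i \<in> I \<Longrightarrow> cell m a W b \<noteq> {} \<Longrightarrow>
        sqrt (real (card {x\<in>cell m a W b. P i x = True}) / real (card (cell m a W b)) * (1/3)) +
        sqrt (real (card {x\<in>cell m a W b. P i x = False}) / real (card (cell m a W b)) * (2/3)) \<le> 2 powr (-(\<delta>\<^sup>2/2))"
        using bc_cell In by blast
    qed (use fW In indI in auto)
    also have "\<dots> = 2 powr (real (card W) - \<delta>\<^sup>2/2 * real (card I))" by (simp add: pow_conv)
    also have "\<dots> \<le> 2 powr (-(\<alpha> * real n))"
    proof (rule powr_mono)
      define X where "X = \<delta>\<^sup>2 * eps (Suc k) / 4 * real n"
      have h1: "g (Suc k) * real n \<le> X" unfolding X_def
        using g_bound[of "Suc k"] ksr by (intro mult_right_mono) auto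
      have h2: "2 * X \<le> \<delta>\<^sup>2/2 * real (card I)"
      proof -
        have "\<delta>\<^sup>2/2 * (eps (Suc k) * real n) \<le> \<delta>\<^sup>2/2 * real (card I)"
          using True by (intro mult_left_mono) auto
        moreover have "2 * X = \<delta>\<^sup>2/2 * (eps (Suc k) * real n)" unfolding X_def by simp
        ultimately show ?thesis by simp
      qed
      have h3: "\<alpha> * real n \<le> X" unfolding X_def
        using alpha_le[of "Suc k"] ksr by (intro mult_right_mono) auto
      show "real (card W) - \<delta>\<^sup>2/2 * real (card I) \<le> -(\<alpha> * real n)"
        using h1 h2 h3 Suc.prems(3) by linarith
    qed simp
    finally show ?thesis .
  next
    case False
    define W' where "W' = W \<union> L"
    have kr: "k \<le> r" using ksr by simp
    have W'U: "W' \<subseteq> {..<n} \<times> {..<r}"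
      unfolding W'_def L_def using Suc.prems(2) C In row_sub by blast
    have cardL: "card L \<le> Suc k * card I"
    proof -
      have "card L \<le> (\<Sum>i\<in>I. card (C i))" unfolding L_def by (rule card_UN_le[OF fI])
      also have "\<dots> \<le> (\<Sum>i\<in>I. Suc k)" by (rule sum_mono) (use C In in blast)
      finally show ?thesis by (simp add: mult.commute)
    qed
    have cW': "real (card W') \<le> g k * real n"
    proof -
      have "card W' \<le> card W + card L" unfolding W'_def by (rule card_Un_le)
      then have "real (card W') \<le> real (card W) + real (Suc k) * real (card I)"
        using cardL by (metis (mono_tags, opaque_lifting) add_left_mono of_nat_add of_nat_le_iff of_nat_mult order_trans)
      moreover have "real (Suc k) * real (card I) \<le> real (Suc k) * (eps (Suc k) * real n)"
        using False by (intro mult_left_mono) auto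
      moreover have "g k * real n = g (Suc k) * real n + real (Suc k) * (eps (Suc k) * real n)"
        using g_rec[of k] ksr by (simp add: algebra_simps)
      ultimately show ?thesis using Suc.prems(3) by linarith
    qed
    have newD: "\<exists>D. D \<subseteq> row r j \<and> card D \<le> k \<and> fn_of m a (W' \<union> D) (P j)" if j: "j < n" for j
    proof (cases "j \<in> I")
      case True
      have "W \<union> C j \<subseteq> W' \<union> {}" unfolding W'_def L_def using True by auto
      then have "fn_of m a (W' \<union> {}) (P j)" using fn_mono C[OF j] by blast
      then show ?thesis by auto
    next
      case False
      have "insert j I \<notin> F"
      proof
        assume "insert j I \<in> F"
        then have "card (insert j I) \<le> card I" by (rule Imax)
        then show False using False fI by simp
      qed
      moreover have "insert j I \<subseteq> {..<n}" using In j by auto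
      ultimately have nind: "\<not> indep m a W (C j \<union> L)" unfolding F_def L_def by auto
      then obtain T R where TR: "T \<subseteq> C j \<union> L" "T \<noteq> {}" "R \<subseteq> W"
        and eqTR: "\<And>x. x \<in> cube m \<Longrightarrow> odd (card {p\<in>T. par (a p) x}) = odd (card {p\<in>R. par (a p) x})"
        unfolding indep_def by blast
      have "\<not> T \<subseteq> L"
      proof
        assume "T \<subseteq> L"
        then obtain x where "x \<in> cube m" "odd (card {p\<in>T. par (a p) x}) \<noteq> odd (card {p\<in>R. par (a p) x})"
          using indI TR(2,3) unfolding indep_def L_def by blast
        then show False using eqTR by blast
      qed
      then obtain p0 where p0: "p0 \<in> T" "p0 \<notin> L" by blast
      then have p0C: "p0 \<in> C j" using TR(1) by blast
      define D where "D = C j - {p0}"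
      have Drow: "D \<subseteq> row r j" unfolding D_def using C[OF j] by blast
      have cD: "card D \<le> k" unfolding D_def using C[OF j] p0C fC[OF j] by (auto simp: card_Diff_singleton)
      have fnS: "fn_of m a (W' \<union> C j) (P j)"
        by (rule fn_mono[of m a "W \<union> C j"]) (use C[OF j] in \<open>auto simp: W'_def\<close>)
      have "fn_of m a (W' \<union> D) (P j)"
      proof (cases "p0 \<in> W'")
        case True
        then have "W' \<union> D = W' \<union> C j" unfolding D_def by auto
        then show ?thesis using fnS by simp
      next
        case False
        define T' where "T' = ((T - {p0}) - R) \<union> (R - (T - {p0}))"
        have fT: "finite T" by (rule finite_subset[OF TR(1)]) (use fL fC[OF j] in simp)
        have fR: "finite R" by (rule finite_subset[OF TR(3) fW])
        have "fn_of m a ((W' \<union> C j) - {p0}) (P j)"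
        proof (rule fn_reduce[OF fnS])
          show "p0 \<in> W' \<union> C j" using p0C by blast
          show "finite T'" unfolding T'_def using fT fR by blast
          show "T' \<subseteq> W' \<union> C j - {p0}"
            unfolding T'_def using TR(1,3) False unfolding W'_def by blast
          fix x assume x: "x \<in> cube m"
          have s1: "odd (card {t\<in>T'. par (a t) x}) = (odd (card {t\<in>T - {p0}. par (a t) x}) \<noteq> odd (card {t\<in>R. par (a t) x}))"
            unfolding T'_def by (rule parity_symdiff) (use fT fR in auto)
          have s2: "odd (card {t\<in>T. par (a t) x}) = (par (a p0) x \<noteq> odd (card {t\<in>T - {p0}. par (a t) x}))"
            by (rule parity_remove[OF fT p0(1)])
          show "par (a p0) x = odd (card {t\<in>T'. par (a t) x})"
            using s1 s2 eqTR[OF x] by auto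
        qed
        moreover have "(W' \<union> C j) - {p0} = W' \<union> D" unfolding D_def using False by auto
        ultimately show ?thesis by simp
      qed
      then show ?thesis using Drow cD by blast
    qed
    show ?thesis by (rule Suc.IH[OF kr W'U cW']) (use newD in blast)
  qed
qed

end

lemma tv_min:
  fixes D1 D2 :: "'a \<Rightarrow> real"
  assumes "finite A" "sum D1 A = 1" "sum D2 A = 1"
  shows "tv A D1 D2 = 1 - (\<Sum>z\<in>A. min (D1 z) (D2 z))"
proof -
  have "(\<Sum>z\<in>A. \<bar>D1 z - D2 z\<bar>) = (\<Sum>z\<in>A. D1 z + D2 z - 2 * min (D1 z) (D2 z))"
    by (rule sum.cong) (auto simp: min_def)
  also have "\<dots> = sum D1 A + sum D2 A - 2 * (\<Sum>z\<in>A. min (D1 z) (D2 z))"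
    by (simp add: sum.distrib sum_subtractf sum_distrib_left)
  finally show ?thesis unfolding tv_def using assms by simp
qed

lemma sum_Pd: "(\<Sum>z\<in>cube n. distr_unif (cube m) (joint n P) z) = 1"
proof -
  have "real (card (cube m)) = (\<Sum>z\<in>cube n. real (card {x\<in>cube m. joint n P x = z}))"
    by (rule card_group) (auto simp: joint_cube)
  moreover have "real (card (cube m)) > 0"
  proof -
    have "cube m \<noteq> {}" using vzero_cube[of m] by blast
    then show ?thesis by (simp add: card_gt_0_iff)
  qed
  ultimately show ?thesis unfolding distr_unif_def by (simp add: sum_divide_distrib[symmetric])
qed

lemma sum_Qd: "(\<Sum>z\<in>cube n. ber_prod n (1/3) z) = 1"
  unfolding ber_prod_def cube_bbox using sum_prod_bbox[of "{..<n}" "\<lambda>_ t. ber (1/3) t"] by simp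

lemma fn_cong:
  assumes "\<And>p. p \<in> S \<Longrightarrow> a p = a' p"
  shows "fn_of m a S Pf = fn_of m a' S Pf"
proof -
  have "restr S (\<lambda>p. par (a p) x) = restr S (\<lambda>p. par (a' p) x)" for x
    using assms unfolding restr_def by auto
  then show ?thesis unfolding fn_of_def by simp
qed

lemma rank_exists: "\<exists>k. 0 < k \<and> rank1_repr m Pf k"
proof (intro exI conjI)
  show "0 < Suc m" by simp
  define L where "L = (\<lambda>j::nat. \<lambda>x::nat \<Rightarrow> bool. j < m \<and> x j)"
  have dl: "deg_le1 m (L j)" for j
  proof (cases "j < m")
    case True
    show ?thesis unfolding deg_le1_def
    proof (intro exI conjI ballI)
      show "{j} \<subseteq> {0..<m}" using True by auto
      fix x :: "nat \<Rightarrow> bool"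
      have e: "{i\<in>{j}. x i} = (if x j then {j} else {})" by auto
      show "L j x = (False \<noteq> odd (card {i\<in>{j}. x i}))"
        unfolding L_def e using True by simp
    qed
  next
    case False
    show ?thesis unfolding deg_le1_def
    proof (intro exI conjI ballI)
      show "{} \<subseteq> {0..<m}" by auto
      fix x :: "nat \<Rightarrow> bool"
      show "L j x = (False \<noteq> odd (card {i\<in>{}. x i}))"
        unfolding L_def using False by auto
    qed
  qed
  show "rank1_repr m Pf (Suc m)" unfolding rank1_repr_def
  proof (intro exI conjI allI impI ballI)
    fix j assume "j < Suc m" show "deg_le1 m (L j)" by (rule dl)
  next
    fix x assume x: "x \<in> cube m"
    have "(\<lambda>j. j < m \<and> (if j < Suc m then L j x else False)) = x"
      using x unfolding L_def cube_def by (auto simp: fun_eq_iff) (meson not_le)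
    then show "Pf x = (\<lambda>z. Pf (\<lambda>j. j < m \<and> z j)) (\<lambda>j. if j < Suc m then L j x else False)" by simp
  qed
qed

lemma rank_fn:
  assumes "rank1 m Pf \<le> r"
  shows "\<exists>a :: nat \<times> nat \<Rightarrow> nat \<Rightarrow> bool. fn_of m a (row r i) Pf"
proof -
  define k where "k = rank1 m Pf"
  have "0 < k \<and> rank1_repr m Pf k"
    unfolding k_def rank1_def by (rule LeastI_ex[OF rank_exists])
  then obtain L \<Gamma> where LG: "\<forall>j<k. deg_le1 m (L j)"
    "\<forall>x\<in>cube m. Pf x = \<Gamma> (\<lambda>j. if j < k then L j x else False)"
    unfolding rank1_repr_def by blast
  have "\<forall>j. \<exists>cS. j < k \<longrightarrow> (snd cS \<subseteq> {0..<m} \<and> (\<forall>x\<in>cube m. L j x = (fst cS \<noteq> odd (card {i\<in>snd cS. x i}))))"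
    using LG(1) unfolding deg_le1_def by auto
  then obtain cS where cS: "\<And>j. j < k \<Longrightarrow> (\<forall>x\<in>cube m. L j x = (fst (cS j) \<noteq> odd (card {i\<in>snd (cS j). x i})))"
    by (metis choice)
  define a :: "nat \<times> nat \<Rightarrow> nat \<Rightarrow> bool" where "a = (\<lambda>p t. t \<in> snd (cS (snd p)))"
  have kr: "k \<le> r" using assms unfolding k_def .
  show ?thesis unfolding fn_of_def
  proof (intro exI ballI)
    fix x assume x: "x \<in> cube m"
    have "(\<lambda>j. if j < k then fst (cS j) \<noteq> restr (row r i) (\<lambda>p. par (a p) x) (i, j) else False) =
          (\<lambda>j. if j < k then L j x else False)"
    proof (rule ext)
      fix j
      show "(if j < k then fst (cS j) \<noteq> restr (row r i) (\<lambda>p. par (a p) x) (i, j) else False) =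
          (if j < k then L j x else False)"
      proof (cases "j < k")
        case True
        then have "(i, j) \<in> row r i" using kr unfolding row_def by auto
        then have "restr (row r i) (\<lambda>p. par (a p) x) (i, j) = odd (card {t\<in>snd (cS j). x t})"
          unfolding restr_def par_def a_def by simp
        then show ?thesis using True cS[OF True] x by simp
      qed simp
    qed
    then show "Pf x = (\<lambda>v. \<Gamma> (\<lambda>j. if j < k then fst (cS j) \<noteq> v (i, j) else False)) (restr (row r i) (\<lambda>p. par (a p) x))"
      using LG(2) x by simp
  qed
qed

theorem theorem8p1:
  shows "\<exists>c::real. c > 0 \<and>
    (\<forall>(r::nat) (\<delta>::real) (n::nat) (m::nat) (P :: nat \<Rightarrow> (nat \<Rightarrow> bool) \<Rightarrow> bool).
      1 \<le> r \<longrightarrow> \<delta> > 0 \<longrightarrow>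
      (\<forall>i<n. rank1 m (P i) \<le> r) \<longrightarrow>
      (\<forall>i<n. \<forall>V h. lin_subspace m V \<longrightarrow> h \<in> cube m \<longrightarrow>
          tv UNIV (distr_unif (affine_sub m V h) (P i)) (ber (1/3)) \<ge> \<delta>) \<longrightarrow>
      tv (cube n) (distr_unif (cube m) (joint n P)) (ber_prod n (1/3))
        \<ge> 1 - 2 powr (- (c ^ r * \<delta> ^ (2 * r) / fact r) * real n + real r))"
proof (intro exI conjI allI impI)
  show "(1/64::real) > 0" by simp
  fix r :: nat and \<delta> :: real and n m :: nat and P :: "nat \<Rightarrow> (nat \<Rightarrow> bool) \<Rightarrow> bool"
  assume r1: "1 \<le> r" and dpos: "\<delta> > 0" and rk: "\<forall>i<n. rank1 m (P i) \<le> r"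
    and hyp: "\<forall>i<n. \<forall>V h. lin_subspace m V \<longrightarrow> h \<in> cube m \<longrightarrow>
          tv UNIV (distr_unif (affine_sub m V h) (P i)) (ber (1/3)) \<ge> \<delta>"
  let ?Pd = "distr_unif (cube m) (joint n P)"
  let ?Qd = "ber_prod n (1/3)"
  have tvmin: "tv (cube n) ?Pd ?Qd = 1 - (\<Sum>z\<in>cube n. min (?Pd z) (?Qd z))"
    by (rule tv_min) (auto simp: sum_Pd sum_Qd)
  show "tv (cube n) ?Pd ?Qd \<ge> 1 - 2 powr (- ((1/64) ^ r * \<delta> ^ (2 * r) / fact r) * real n + real r)"
  proof (cases "n = 0")
    case True
    have "tv (cube n) ?Pd ?Qd \<ge> 0" unfolding tv_def by (simp add: sum_nonneg)
    moreover have "2 powr (- ((1/64) ^ r * \<delta> ^ (2 * r) / fact r) * real n + real r) \<ge> 1"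
      using True by (simp add: ge_one_powr_ge_zero)
    ultimately show ?thesis by linarith
  next
    case False
    then have n0: "0 < n" by simp
    have d1: "\<delta> \<le> 1"
    proof -
      have ls: "lin_subspace m (cube m)" unfolding lin_subspace_def by auto
      have as: "affine_sub m (cube m) vzero = cube m" unfolding affine_sub_def by simp
      have "\<delta> \<le> tv UNIV (distr_unif (cube m) (P 0)) (ber (1/3))"
        using hyp n0 ls as by (metis vzero_cube)
      also have "\<dots> = \<bar>real (card {x\<in>cube m. P 0 x}) / real (card (cube m)) - 1/3\<bar>"
      proof (rule tv_bool)
        show "cube m \<noteq> {}" using vzero_cube[of m] by blast
      qed simp
      also have "\<dots> \<le> 1"
      proof -
        have "card {x\<in>cube m. P 0 x} \<le> card (cube m)" by (rule card_mono) auto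
        moreover have "real (card (cube m)) > 0"
        proof -
          have "cube m \<noteq> {}" using vzero_cube[of m] by blast
          then show ?thesis by (simp add: card_gt_0_iff)
        qed
        ultimately have "real (card {x\<in>cube m. P 0 x}) / real (card (cube m)) \<le> 1"
          by (simp add: divide_le_eq_1)
        moreover have "real (card {x\<in>cube m. P 0 x}) / real (card (cube m)) \<ge> 0" by simp
        ultimately show ?thesis by linarith
      qed
      finally show ?thesis .
    qed
    have "\<forall>i. \<exists>ai :: nat \<times> nat \<Rightarrow> nat \<Rightarrow> bool. i < n \<longrightarrow> fn_of m ai (row r i) (P i)"
      using rk rank_fn by blast
    then obtain af :: "nat \<Rightarrow> nat \<times> nat \<Rightarrow> nat \<Rightarrow> bool" where
      af: "\<And>i. i < n \<Longrightarrow> fn_of m (af i) (row r i) (P i)"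
      by (metis choice)
    define a where "a = (\<lambda>p. af (fst p) p)"
    have rep: "fn_of m a (row r i) (P i)" if "i < n" for i
    proof -
      have "fn_of m a (row r i) (P i) = fn_of m (af i) (row r i) (P i)"
        by (rule fn_cong) (auto simp: a_def row_def)
      then show ?thesis using af[OF that] by simp
    qed
    interpret S: setup8 m n r \<delta> P a
      by unfold_locales (use r1 dpos d1 rep hyp in auto)
    have "S.SM \<le> 2 powr (-(S.\<alpha> * real n))"
    proof (rule S.stage[of r "{}"])
      show "real (card {}) \<le> S.g r * real n" unfolding S.g_def by simp
      show "\<forall>j<n. \<exists>D. D \<subseteq> row r j \<and> card D \<le> r \<and> fn_of m a ({} \<union> D) (P j)"
        using rep by (auto simp: row_def intro!: exI[of _ "row r _"])
    qed auto
    moreover have "2 powr (-(S.\<alpha> * real n)) \<le> 2 powr (- ((1/64) ^ r * \<delta> ^ (2 * r) / fact r) * real n + real r)"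
      by (rule powr_mono) (auto simp: S.\<alpha>_def)
    ultimately show ?thesis using tvmin unfolding S.SM_def by linarith
  qed
qed

end
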